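(* Let $N\geq 3$ and let $(M,g)$ be an $N$-dimensional Riemannian model with pole $o$ and metric $ds^2=dr^2+\psi^2(r)\,d\omega^2$, where $\psi$ is a $C^\infty$ nonnegative function on $[0,+\infty)$, positive on $(0,+\infty)$, with $\psi'(0)=1$ and $\psi^{(2k)}(0)=0$ for all $k\geq0$. Then for all $u\in C_c^\infty(M)$, $$\int_M(\Delta_{r,g}u)^2\,dv_g-\frac{N-1}{4}\int_M\Big[\Lambda_{\pi,r}^{rad}+4\big(K_{\pi,r}^{rad}-H_{\pi,r}^{tan}\big)\Big]\Big(\frac{\partial u}{\partial r}\Big)^2dv_g\geq\frac14\int_M\frac1{r^2}\Big(\frac{\partial u}{\partial r}\Big)^2dv_g+\frac{N^2-1}{4}\int_M\frac1{\psi^2}\Big(\frac{\partial u}{\partial r}\Big)^2dv_g.$$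
   Context: $d\omega^2$ is the standard metric on $\mathbb{S}^{N-1}$, $r$ the geodesic distance from $o$, $\frac{\partial u}{\partial r}$ the radial derivative in spherical coordinates, $dv_g$ the Riemannian volume. The radial part of the Laplace–Beltrami operator is $\Delta_{r,g}u=\frac{\partial^2u}{\partial r^2}+(N-1)\frac{\psi'}{\psi}\frac{\partial u}{\partial r}$. Curvatures: $K_{\pi,r}^{rad}=-\frac{\psi''}{\psi}$, $H_{\pi,r}^{tan}=-\frac{(\psi')^2-1}{\psi^2}$, and $\Lambda_{\pi,r}^{rad}=-2K_{\pi,r}^{rad}-(N-3)H_{\pi,r}^{tan}$. *)

theory Defs
  imports "HOL-Analysis.Analysis"
begin

fun iter_dderiv :: "'a::euclidean_space list \<Rightarrow> ('a \<Rightarrow> real) \<Rightarrow> 'a \<Rightarrow> real" where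
  "iter_dderiv [] f = f"
| "iter_dderiv (v # vs) f = (\<lambda>x. frechet_derivative (iter_dderiv vs f) (at x) v)"

definition smooth_fun :: "('a::euclidean_space \<Rightarrow> real) \<Rightarrow> bool" where
  "smooth_fun f \<longleftrightarrow> (\<forall>vs. iter_dderiv vs f differentiable_on UNIV)"

definition compact_support :: "('a::euclidean_space \<Rightarrow> real) \<Rightarrow> bool" where
  "compact_support f \<longleftrightarrow> compact (closure {x. f x \<noteq> 0})"

text \<open>Points of the model are written in normal (exponential) coordinates at the pole:
  x in R^N, r = norm x, direction sgn x in the unit sphere.\<close>
definition radial_deriv :: "('a::euclidean_space \<Rightarrow> real) \<Rightarrow> 'a \<Rightarrow> real" where
  "radial_deriv u x = deriv (\<lambda>t. u (t *\<^sub>R sgn x)) (norm x)"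

definition radial_deriv2 :: "('a::euclidean_space \<Rightarrow> real) \<Rightarrow> 'a \<Rightarrow> real" where
  "radial_deriv2 u x = deriv (deriv (\<lambda>t. u (t *\<^sub>R sgn x))) (norm x)"

text \<open>D k is the k-th derivative of psi on [0,\<infinity>); N the dimension.\<close>
definition radial_laplacian ::
  "nat \<Rightarrow> (nat \<Rightarrow> real \<Rightarrow> real) \<Rightarrow> ('a::euclidean_space \<Rightarrow> real) \<Rightarrow> 'a \<Rightarrow> real" where
  "radial_laplacian N D u x =
     radial_deriv2 u x + real (N - 1) * (D 1 (norm x) / D 0 (norm x)) * radial_deriv u x"

definition K_rad :: "(nat \<Rightarrow> real \<Rightarrow> real) \<Rightarrow> real \<Rightarrow> real" where
  "K_rad D r = - (D 2 r / D 0 r)"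

definition H_tan :: "(nat \<Rightarrow> real \<Rightarrow> real) \<Rightarrow> real \<Rightarrow> real" where
  "H_tan D r = - (((D 1 r)\<^sup>2 - 1) / (D 0 r)\<^sup>2)"

definition Lambda_rad :: "nat \<Rightarrow> (nat \<Rightarrow> real \<Rightarrow> real) \<Rightarrow> real \<Rightarrow> real" where
  "Lambda_rad N D r = - 2 * K_rad D r - (real N - 3) * H_tan D r"

text \<open>Riemannian volume density w.r.t. Lebesgue measure in normal coordinates:
  dv_g = (psi(r)/r)^(N-1) dx, since dv_g = psi(r)^(N-1) dr d\<omega> and dx = r^(N-1) dr d\<omega>.\<close>
definition vol_density :: "nat \<Rightarrow> (real \<Rightarrow> real) \<Rightarrow> 'a::euclidean_space \<Rightarrow> real" where
  "vol_density N psi x = (psi (norm x) / norm x) ^ (N - 1)"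

end

theory Submission
  imports Defs
begin

lemma scale_sgn: "x \<noteq> 0 \<Longrightarrow> (c * norm x) *\<^sub>R sgn x = c *\<^sub>R (x::'a::real_normed_vector)"
  by (simp add: sgn_div_norm)

lemma polar_nn:
  fixes f :: "'a::euclidean_space \<Rightarrow> ennreal"
  assumes f[measurable]: "f \<in> borel_measurable borel"
  shows "(\<integral>\<^sup>+x. f x \<partial>lborel) = of_nat DIM('a) * (\<integral>\<^sup>+x. indicator (cball 0 1) x *
      (\<integral>\<^sup>+\<rho>. indicator {0<..} \<rho> * f (\<rho> *\<^sub>R sgn x) * ennreal (\<rho>^(DIM('a)-1)) \<partial>lborel) \<partial>lborel)"
proof -
  define N where "N = DIM('a)"
  have N1: "N \<ge> 1" unfolding N_def by (simp add: DIM_positive Suc_leI)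
  have step1: "(\<integral>\<^sup>+\<rho>. indicator {0<..} \<rho> * f (\<rho> *\<^sub>R sgn x) * ennreal (\<rho>^(N-1)) \<partial>lborel)
     = (\<integral>\<^sup>+s. indicator {0<..} s * f (s *\<^sub>R x) * ennreal (s^(N-1) * norm x ^ N) \<partial>lborel)"
    if x: "x \<noteq> 0" for x
  proof -
    define c where "c = norm x"
    have c: "c > 0" using x by (simp add: c_def)
    have "(\<integral>\<^sup>+\<rho>. indicator {0<..} \<rho> * f (\<rho> *\<^sub>R sgn x) * ennreal (\<rho>^(N-1)) \<partial>lborel)
       = ennreal \<bar>c\<bar> * (\<integral>\<^sup>+s. indicator {0<..} (0 + c * s) * f ((0 + c * s) *\<^sub>R sgn x) * ennreal ((0 + c * s)^(N-1)) \<partial>lborel)"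
      by (rule nn_integral_real_affine) (use c in auto)
    also have "\<dots> = (\<integral>\<^sup>+s. ennreal c * (indicator {0<..} (0 + c * s) * f ((0 + c * s) *\<^sub>R sgn x) * ennreal ((0 + c * s)^(N-1))) \<partial>lborel)"
      using c by (subst nn_integral_cmult) auto
    also have "\<dots> = (\<integral>\<^sup>+s. indicator {0<..} s * f (s *\<^sub>R x) * ennreal (s^(N-1) * norm x ^ N) \<partial>lborel)"
    proof (rule nn_integral_cong)
      fix s :: real
      show "ennreal c * (indicator {0<..} (0 + c * s) * f ((0 + c * s) *\<^sub>R sgn x) * ennreal ((0 + c * s)^(N-1)))
          = indicator {0<..} s * f (s *\<^sub>R x) * ennreal (s^(N-1) * norm x ^ N)"
      proof (cases "s > 0")
        case True
        have e1: "(c * s) *\<^sub>R sgn x = s *\<^sub>R x" using scale_sgn[OF x, of s] by (simp add: c_def mult.commute)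
        have e2: "c * (c * s) ^ (N - 1) = s^(N-1) * norm x ^ N"
        proof -
          from N1 obtain m where m: "N = Suc m" by (cases N) auto
          show ?thesis by (simp add: m c_def power_mult_distrib)
        qed
        have "ennreal c * ennreal ((c * s)^(N-1)) = ennreal (s^(N-1) * norm x ^ N)"
          using c True e2 by (simp add: ennreal_mult'[symmetric])
        moreover have "ennreal c * (f (s *\<^sub>R x) * ennreal ((c * s)^(N-1))) = f (s *\<^sub>R x) * (ennreal c * ennreal ((c * s)^(N-1)))"
          by (simp add: ac_simps)
        ultimately show ?thesis using True c e1
          by (simp add: indicator_def zero_less_mult_iff)
      next
        case False
        then show ?thesis using c by (simp add: indicator_def zero_less_mult_iff)
      qed
    qed
    finally show ?thesis .
  qed

  define H where "H x s = (if norm x \<le> 1 \<and> 0 < s then f (s *\<^sub>R x) * ennreal (s^(N-1) * norm x ^ N) else 0)" for x :: 'a and s :: real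
  define G where "G s y = (if 0 < s \<and> norm y \<le> s then f y * ennreal (norm y ^ N / s^(N+1)) else 0)" for s :: real and y :: 'a
  have Hm: "(\<lambda>(x, s). H x s) \<in> borel_measurable (lborel \<Otimes>\<^sub>M lborel)"
    unfolding H_def by measurable
  have Gm: "(\<lambda>(s, y). G s y) \<in> borel_measurable (lborel \<Otimes>\<^sub>M lborel)"
    unfolding G_def by measurable
  have "(\<integral>\<^sup>+x. indicator (cball 0 1) x *
      (\<integral>\<^sup>+\<rho>. indicator {0<..} \<rho> * f (\<rho> *\<^sub>R sgn x) * ennreal (\<rho>^(N-1)) \<partial>lborel) \<partial>lborel)
     = (\<integral>\<^sup>+x. (\<integral>\<^sup>+s. H x s \<partial>lborel) \<partial>lborel)"
  proof (rule nn_integral_cong_AE)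
    show "AE x in lborel. indicator (cball 0 1) x *
      (\<integral>\<^sup>+\<rho>. indicator {0<..} \<rho> * f (\<rho> *\<^sub>R sgn x) * ennreal (\<rho>^(N-1)) \<partial>lborel) = (\<integral>\<^sup>+s. H x s \<partial>lborel)"
    proof (rule eventually_mono[OF AE_lborel_singleton[of 0]])
      fix x :: 'a assume x: "x \<noteq> 0"
      show "indicator (cball 0 1) x *
      (\<integral>\<^sup>+\<rho>. indicator {0<..} \<rho> * f (\<rho> *\<^sub>R sgn x) * ennreal (\<rho>^(N-1)) \<partial>lborel) = (\<integral>\<^sup>+s. H x s \<partial>lborel)"
      proof (cases "norm x \<le> 1")
        case True
        then show ?thesis unfolding step1[OF x]
          by (subst nn_integral_cmult[symmetric]) (auto simp: H_def indicator_def intro!: nn_integral_cong)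
      next
        case False
        then show ?thesis by (simp add: H_def)
      qed
    qed
  qed
  also have "\<dots> = (\<integral>\<^sup>+s. (\<integral>\<^sup>+x. H x s \<partial>lborel) \<partial>lborel)"
    using lborel_pair.Fubini'[OF Hm] by simp
  also have "\<dots> = (\<integral>\<^sup>+s. (\<integral>\<^sup>+y. G s y \<partial>lborel) \<partial>lborel)"
  proof (rule nn_integral_cong)
    fix s :: real
    show "(\<integral>\<^sup>+x. H x s \<partial>lborel) = (\<integral>\<^sup>+y. G s y \<partial>lborel)"
    proof (cases "s > 0")
      case False
      then show ?thesis by (simp add: H_def G_def)
    next
      case True
      have Gsm[measurable]: "G s \<in> borel_measurable borel" unfolding G_def by measurable
      have "(\<integral>\<^sup>+y. G s y \<partial>lborel) = (\<integral>\<^sup>+x. ennreal (\<bar>s\<bar>^N) * G s (0 + s *\<^sub>R x) \<partial>lborel)"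
        unfolding N_def using True
        by (subst lborel_affine[of s 0]) (simp_all add: nn_integral_density nn_integral_distr)
      also have "\<dots> = (\<integral>\<^sup>+x. H x s \<partial>lborel)"
      proof (rule nn_integral_cong)
        fix x :: 'a
        have e: "s ^ N * ((s * norm x) ^ N / s ^ (N + 1)) = s^(N-1) * norm x ^ N"
        proof -
          from N1 obtain m where m: "N = Suc m" by (cases N) auto
          show ?thesis using True by (simp add: m power_mult_distrib field_simps)
        qed
        have "ennreal (\<bar>s\<bar>^N) * G s (0 + s *\<^sub>R x) = 
           (if norm x \<le> 1 then f (s *\<^sub>R x) * (ennreal (s^N) * ennreal ((s * norm x) ^ N / s^(N+1))) else 0)"
          using True by (simp add: G_def ac_simps)
        also have "\<dots> = H x s"
          using True e by (simp add: H_def ennreal_mult'[symmetric])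
        finally show "ennreal (\<bar>s\<bar>^N) * G s (0 + s *\<^sub>R x) = H x s" .
      qed
      finally show ?thesis by simp
    qed
  qed
  also have "\<dots> = (\<integral>\<^sup>+y. (\<integral>\<^sup>+s. G s y \<partial>lborel) \<partial>lborel)"
    using lborel_pair.Fubini'[OF Gm] by simp
  also have "\<dots> = (\<integral>\<^sup>+y. f y * ennreal (1 / real N) \<partial>lborel)"
  proof (rule nn_integral_cong_AE)
    show "AE y in lborel. (\<integral>\<^sup>+s. G s y \<partial>lborel) = f y * ennreal (1 / real N)"
    proof (rule eventually_mono[OF AE_lborel_singleton[of 0]])
      fix y :: 'a assume y: "y \<noteq> 0"
      define a where "a = norm y"
      have a: "a > 0" using y by (simp add: a_def)
      have hi: "((\<lambda>s. a^N * s powr (- real (N+1))) has_integral a^N * (- (a powr (- real (N+1) + 1)) / (- real (N+1) + 1))) {a..}"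
        by (rule has_integral_mult_right, rule has_integral_powr_to_inf) (use a N1 in auto)
      have val: "a^N * (- (a powr (- real (N+1) + 1)) / (- real (N+1) + 1)) = 1 / real N"
      proof -
        have "a powr (- real (N+1) + 1) = 1 / a^N"
          using a by (simp add: powr_minus powr_realpow[symmetric] divide_simps)
        then show ?thesis using a N1 by (simp add: field_simps)
      qed
      have "(\<integral>\<^sup>+s. ennreal (indicator {a..} s * (a^N * s powr (- real (N+1)))) \<partial>lborel) = ennreal (1 / real N)"
        using nn_integral_has_integral_lebesgue[OF _ hi] val a by simp
      moreover have "(\<integral>\<^sup>+s. G s y \<partial>lborel) = f y * (\<integral>\<^sup>+s. ennreal (indicator {a..} s * (a^N * s powr (- real (N+1)))) \<partial>lborel)"
      proof (subst nn_integral_cmult[symmetric])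
        show "(\<lambda>s. ennreal (indicator {a..} s * (a^N * s powr (- real (N+1))))) \<in> borel_measurable lborel"
          by measurable
        show "(\<integral>\<^sup>+s. G s y \<partial>lborel) = (\<integral>\<^sup>+s. f y * ennreal (indicator {a..} s * (a^N * s powr (- real (N+1)))) \<partial>lborel)"
        proof (rule nn_integral_cong)
          fix s :: real
          show "G s y = f y * ennreal (indicator {a..} s * (a^N * s powr (- real (N+1))))"
          proof (cases "a \<le> s")
            case True
            then have "s > 0" using a by linarith
            have "s powr (- real (N+1)) = inverse (s powr real (N+1))" by (rule powr_minus)
            also have "\<dots> = 1 / s^(N+1)" using \<open>s > 0\<close> by (simp only: powr_realpow inverse_eq_divide)
            finally have "s powr (- real (N+1)) = 1 / s^(N+1)" .
            then show ?thesis using True \<open>s > 0\<close> by (simp add: G_def a_def)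
          next
            case False
            then show ?thesis by (simp add: G_def a_def)
          qed
        qed
      qed
      ultimately show "(\<integral>\<^sup>+s. G s y \<partial>lborel) = f y * ennreal (1 / real N)" by simp
    qed
  qed
  finally have eq: "(\<integral>\<^sup>+x. indicator (cball 0 1) x *
      (\<integral>\<^sup>+\<rho>. indicator {0<..} \<rho> * f (\<rho> *\<^sub>R sgn x) * ennreal (\<rho>^(N-1)) \<partial>lborel) \<partial>lborel)
     = (\<integral>\<^sup>+y. f y * ennreal (1 / real N) \<partial>lborel)" .
  have "of_nat N * (\<integral>\<^sup>+y. f y * ennreal (1 / real N) \<partial>lborel) = (\<integral>\<^sup>+y. ennreal (real N) * (f y * ennreal (1 / real N)) \<partial>lborel)"
    by (subst nn_integral_cmult) (auto simp: ennreal_of_nat_eq_real_of_nat)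
  also have "\<dots> = (\<integral>\<^sup>+y. f y \<partial>lborel)"
  proof (rule nn_integral_cong)
    fix y
    have "ennreal (real N) * ennreal (1 / real N) = 1"
      using N1 by (simp add: ennreal_mult'[symmetric])
    then show "ennreal (real N) * (f y * ennreal (1 / real N)) = f y"
      by (metis mult.left_commute mult.right_neutral)
  qed
  finally show ?thesis using eq unfolding N_def by simp
qed

lemma smooth_diff_at: "smooth_fun u \<Longrightarrow> iter_dderiv vs u differentiable (at x)"
  unfolding smooth_fun_def using differentiable_on_eq_differentiable_at[OF open_UNIV] by blast

lemma smooth_cont: "smooth_fun u \<Longrightarrow> continuous_on UNIV (iter_dderiv vs u)"
  unfolding smooth_fun_def using differentiable_imp_continuous_on by blast

lemma smooth_meas: "smooth_fun u \<Longrightarrow> iter_dderiv vs u \<in> borel_measurable borel"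
  using smooth_cont borel_measurable_continuous_onI by blast

lemma ray_deriv:
  fixes h :: "'a::euclidean_space \<Rightarrow> real"
  assumes "\<And>x. h differentiable (at x)"
  shows "((\<lambda>t. h (t *\<^sub>R w)) has_real_derivative frechet_derivative h (at (t *\<^sub>R w)) w) (at t)"
proof -
  have d: "(h has_derivative frechet_derivative h (at (t *\<^sub>R w))) (at (t *\<^sub>R w))"
    using assms frechet_derivative_works by blast
  have l: "linear (frechet_derivative h (at (t *\<^sub>R w)))" using has_derivative_linear[OF d] .
  have s: "((\<lambda>t. t *\<^sub>R w) has_derivative (\<lambda>s. s *\<^sub>R w)) (at t)"
    by (auto intro!: derivative_eq_intros)
  have "((\<lambda>t. h (t *\<^sub>R w)) has_derivative (\<lambda>s. frechet_derivative h (at (t *\<^sub>R w)) (s *\<^sub>R w))) (at t)"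
    using diff_chain_at[OF s d] by (simp add: o_def)
  moreover have "(\<lambda>s. frechet_derivative h (at (t *\<^sub>R w)) (s *\<^sub>R w)) = (*) (frechet_derivative h (at (t *\<^sub>R w)) w)"
    using linear_scale[OF l] by (auto simp: mult.commute)
  ultimately show ?thesis unfolding has_field_derivative_def by simp
qed

lemma ray_props:
  fixes u :: "'a::euclidean_space \<Rightarrow> real"
  assumes u: "smooth_fun u"
  shows "((\<lambda>t. u (t *\<^sub>R w)) has_real_derivative iter_dderiv [w] u (t *\<^sub>R w)) (at t)"
    and "deriv (\<lambda>t. u (t *\<^sub>R w)) = (\<lambda>t. iter_dderiv [w] u (t *\<^sub>R w))"
    and "(deriv (\<lambda>t. u (t *\<^sub>R w)) has_real_derivative iter_dderiv [w, w] u (t *\<^sub>R w)) (at t)"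
    and "deriv (deriv (\<lambda>t. u (t *\<^sub>R w))) = (\<lambda>t. iter_dderiv [w, w] u (t *\<^sub>R w))"
proof -
  have d0: "\<And>x. u differentiable (at x)" using smooth_diff_at[OF u, of "[]"] by simp
  have d1: "\<And>x. iter_dderiv [w] u differentiable (at x)" using smooth_diff_at[OF u] by blast
  show 1: "((\<lambda>t. u (t *\<^sub>R w)) has_real_derivative iter_dderiv [w] u (t *\<^sub>R w)) (at t)" for t
    using ray_deriv[OF d0, of w t] by simp
  show 2: "deriv (\<lambda>t. u (t *\<^sub>R w)) = (\<lambda>t. iter_dderiv [w] u (t *\<^sub>R w))"
    using 1 DERIV_imp_deriv by blast
  show 3: "(deriv (\<lambda>t. u (t *\<^sub>R w)) has_real_derivative iter_dderiv [w, w] u (t *\<^sub>R w)) (at t)" for t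
    unfolding 2 using ray_deriv[OF d1, of w t] by simp
  show "deriv (deriv (\<lambda>t. u (t *\<^sub>R w))) = (\<lambda>t. iter_dderiv [w, w] u (t *\<^sub>R w))"
    using 3 DERIV_imp_deriv by blast
qed

lemma norm_sgn_scale: "norm x *\<^sub>R sgn x = (x::'a::real_normed_vector)"
  by (cases "x = 0") (simp_all add: sgn_div_norm)

lemma radial_deriv_eq: "smooth_fun u \<Longrightarrow> radial_deriv u x = iter_dderiv [sgn x] u x"
  unfolding radial_deriv_def using ray_props(2)[of u "sgn x"] by (simp add: norm_sgn_scale)

lemma radial_deriv2_eq: "smooth_fun u \<Longrightarrow> radial_deriv2 u x = iter_dderiv [sgn x, sgn x] u x"
  unfolding radial_deriv2_def using ray_props(4)[of u "sgn x"] by (simp add: norm_sgn_scale)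

lemma fd_expand:
  fixes h :: "'a::euclidean_space \<Rightarrow> real"
  assumes "h differentiable (at x)"
  shows "frechet_derivative h (at x) e = (\<Sum>i\<in>Basis. (e \<bullet> i) * frechet_derivative h (at x) i)"
proof -
  have l: "linear (frechet_derivative h (at x))"
    using has_derivative_linear assms frechet_derivative_works by blast
  show ?thesis using Linear_Algebra.linear_componentwise[OF l, of e 1] by simp
qed

lemma dd1_expand: "smooth_fun u \<Longrightarrow> iter_dderiv [e] u x = (\<Sum>i\<in>Basis. (e \<bullet> i) * iter_dderiv [i] u x)"
  using fd_expand[of u x e] smooth_diff_at[of u "[]" x] by simp

lemma dd2_expand:
  assumes u: "smooth_fun u"
  shows "iter_dderiv [e, e] u x = (\<Sum>j\<in>Basis. (e \<bullet> j) * (\<Sum>i\<in>Basis. (e \<bullet> i) * iter_dderiv [i, j] u x))"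
proof -
  have eq: "iter_dderiv [e] u = (\<lambda>y. \<Sum>j\<in>Basis. (e \<bullet> j) * iter_dderiv [j] u y)"
    by (intro ext dd1_expand[OF u])
  have dj: "(iter_dderiv [j] u has_derivative frechet_derivative (iter_dderiv [j] u) (at x)) (at x)" for j
    using smooth_diff_at[OF u] frechet_derivative_works by blast
  have "((\<lambda>y. \<Sum>j\<in>Basis. (e \<bullet> j) * iter_dderiv [j] u y) has_derivative
          (\<lambda>h. \<Sum>j\<in>Basis. (e \<bullet> j) * frechet_derivative (iter_dderiv [j] u) (at x) h)) (at x)"
    by (intro has_derivative_sum has_derivative_mult_right dj)
  then have fe: "frechet_derivative (iter_dderiv [e] u) (at x) = 
          (\<lambda>h. \<Sum>j\<in>Basis. (e \<bullet> j) * frechet_derivative (iter_dderiv [j] u) (at x) h)"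
    unfolding eq by (rule frechet_derivative_at[symmetric])
  have "iter_dderiv [e, e] u x = (\<Sum>j\<in>Basis. (e \<bullet> j) * frechet_derivative (iter_dderiv [j] u) (at x) e)"
    using fe by simp
  also have "\<dots> = (\<Sum>j\<in>Basis. (e \<bullet> j) * (\<Sum>i\<in>Basis. (e \<bullet> i) * iter_dderiv [i, j] u x))"
  proof (intro sum.cong refl)
    fix j :: 'a
    have "frechet_derivative (iter_dderiv [j] u) (at x) e = (\<Sum>i\<in>Basis. (e \<bullet> i) * frechet_derivative (iter_dderiv [j] u) (at x) i)"
      by (rule fd_expand) (rule smooth_diff_at[OF u])
    then show "(e \<bullet> j) * frechet_derivative (iter_dderiv [j] u) (at x) e = (e \<bullet> j) * (\<Sum>i\<in>Basis. (e \<bullet> i) * iter_dderiv [i, j] u x)"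
      by simp
  qed
  finally show ?thesis .
qed

lemma radial_deriv_meas: "smooth_fun u \<Longrightarrow> radial_deriv u \<in> borel_measurable borel"
proof -
  assume u: "smooth_fun u"
  have [measurable]: "iter_dderiv vs u \<in> borel_measurable borel" for vs using smooth_meas[OF u] .
  have "radial_deriv u x = (\<Sum>i\<in>Basis. (sgn x \<bullet> i) * iter_dderiv [i] u x)" for x
    by (rule trans[OF radial_deriv_eq[OF u, of x] dd1_expand[OF u, of "sgn x" x]])
  then have "radial_deriv u = (\<lambda>x. \<Sum>i\<in>Basis. (sgn x \<bullet> i) * iter_dderiv [i] u x)"
    by (intro ext)
  moreover have "(\<lambda>x. \<Sum>i\<in>Basis. (sgn x \<bullet> i) * iter_dderiv [i] u x) \<in> borel_measurable borel"
    unfolding sgn_div_norm by measurable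
  ultimately show ?thesis by simp
qed

lemma radial_deriv2_meas: "smooth_fun u \<Longrightarrow> radial_deriv2 u \<in> borel_measurable borel"
proof -
  assume u: "smooth_fun u"
  have [measurable]: "iter_dderiv vs u \<in> borel_measurable borel" for vs using smooth_meas[OF u] .
  have "radial_deriv2 u x = (\<Sum>j\<in>Basis. (sgn x \<bullet> j) * (\<Sum>i\<in>Basis. (sgn x \<bullet> i) * iter_dderiv [i, j] u x))" for x
    by (rule trans[OF radial_deriv2_eq[OF u, of x] dd2_expand[OF u, of "sgn x" x]])
  then have "radial_deriv2 u = (\<lambda>x. \<Sum>j\<in>Basis. (sgn x \<bullet> j) * (\<Sum>i\<in>Basis. (sgn x \<bullet> i) * iter_dderiv [i, j] u x))"
    by (intro ext)
  moreover have "(\<lambda>x. \<Sum>j\<in>Basis. (sgn x \<bullet> j) * (\<Sum>i\<in>Basis. (sgn x \<bullet> i) * iter_dderiv [i, j] u x)) \<in> borel_measurable borel"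
    unfolding sgn_div_norm by measurable
  ultimately show ?thesis by simp
qed

lemma abs_mult_le1: "\<bar>a\<bar> \<le> 1 \<Longrightarrow> \<bar>b::real\<bar> \<le> c \<Longrightarrow> \<bar>a * b\<bar> \<le> c"
proof -
  assume a: "\<bar>a\<bar> \<le> 1" and b: "\<bar>b\<bar> \<le> c"
  have "\<bar>a\<bar> * \<bar>b\<bar> \<le> 1 * \<bar>b\<bar>" by (rule mult_right_mono) (use a in auto)
  then show ?thesis using b by (simp add: abs_mult)
qed

lemma dd_bounds:
  fixes u :: "'a::euclidean_space \<Rightarrow> real"
  assumes u: "smooth_fun u"
  obtains M where "M \<ge> 0" "\<And>x. norm x \<le> R \<Longrightarrow> \<bar>radial_deriv u x\<bar> \<le> M"
     "\<And>x. norm x \<le> R \<Longrightarrow> \<bar>radial_deriv2 u x\<bar> \<le> M"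
proof -
  define S where "S x = (\<Sum>i\<in>Basis. \<bar>iter_dderiv [i] u x\<bar>) + (\<Sum>j\<in>Basis. \<Sum>i\<in>Basis. \<bar>iter_dderiv [i, j] u x\<bar>)" for x
  have c: "\<And>vs. continuous_on (cball 0 R) (iter_dderiv vs u)"
    using smooth_cont[OF u] continuous_on_subset by blast
  have "continuous_on (cball 0 R) S"
    unfolding S_def by (intro continuous_intros c)
  then have "compact (S ` cball 0 R)" by (rule compact_continuous_image) simp
  then obtain B where B0: "\<forall>y\<in>S ` cball 0 R. norm y \<le> B"
    using compact_imp_bounded[of "S ` cball 0 R"] unfolding bounded_iff by blast
  have B: "S x \<le> B" if "norm x \<le> R" for x
  proof -
    have "x \<in> cball 0 R" using that by simp
    then have "\<bar>S x\<bar> \<le> B" using B0 by auto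
    then show ?thesis by linarith
  qed
  have b1: "\<bar>radial_deriv u x\<bar> \<le> S x" for x
  proof -
    have "\<bar>radial_deriv u x\<bar> = \<bar>\<Sum>i\<in>Basis. (sgn x \<bullet> i) * iter_dderiv [i] u x\<bar>"
      by (simp only: trans[OF radial_deriv_eq[OF u, of x] dd1_expand[OF u, of "sgn x" x]])
    also have "\<dots> \<le> (\<Sum>i\<in>Basis. \<bar>(sgn x \<bullet> i) * iter_dderiv [i] u x\<bar>)" by (rule sum_abs)
    also have "\<dots> \<le> (\<Sum>i\<in>Basis. \<bar>iter_dderiv [i] u x\<bar>)"
    proof (rule sum_mono)
      fix i :: 'a assume i: "i \<in> Basis"
      have "\<bar>sgn x \<bullet> i\<bar> \<le> 1" using Basis_le_norm[OF i, of "sgn x"] norm_sgn[of x] by (auto split: if_splits)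
      then show "\<bar>(sgn x \<bullet> i) * iter_dderiv [i] u x\<bar> \<le> \<bar>iter_dderiv [i] u x\<bar>"
        by (rule abs_mult_le1) simp
    qed
    also have "\<dots> \<le> S x" unfolding S_def by (simp add: sum_nonneg)
    finally show ?thesis .
  qed
  have b2: "\<bar>radial_deriv2 u x\<bar> \<le> S x" for x
  proof -
    have sb: "\<bar>sgn x \<bullet> i\<bar> \<le> 1" if i: "i \<in> Basis" for i :: 'a
      using Basis_le_norm[OF i, of "sgn x"] norm_sgn[of x] by (auto split: if_splits)
    have "\<bar>radial_deriv2 u x\<bar> = \<bar>\<Sum>j\<in>Basis. (sgn x \<bullet> j) * (\<Sum>i\<in>Basis. (sgn x \<bullet> i) * iter_dderiv [i, j] u x)\<bar>"
      by (simp only: trans[OF radial_deriv2_eq[OF u, of x] dd2_expand[OF u, of "sgn x" x]])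
    also have "\<dots> \<le> (\<Sum>j\<in>Basis. \<bar>(sgn x \<bullet> j) * (\<Sum>i\<in>Basis. (sgn x \<bullet> i) * iter_dderiv [i, j] u x)\<bar>)" by (rule sum_abs)
    also have "\<dots> \<le> (\<Sum>j\<in>Basis. \<Sum>i\<in>Basis. \<bar>iter_dderiv [i, j] u x\<bar>)"
    proof (rule sum_mono)
      fix j :: 'a assume j: "j \<in> Basis"
      have "\<bar>(\<Sum>i\<in>Basis. (sgn x \<bullet> i) * iter_dderiv [i, j] u x)\<bar> \<le> (\<Sum>i\<in>Basis. \<bar>(sgn x \<bullet> i) * iter_dderiv [i, j] u x\<bar>)"
        by (rule sum_abs)
      also have "\<dots> \<le> (\<Sum>i\<in>Basis. \<bar>iter_dderiv [i, j] u x\<bar>)"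
        by (rule sum_mono) (use sb in \<open>auto intro: abs_mult_le1\<close>)
      finally have "\<bar>(\<Sum>i\<in>Basis. (sgn x \<bullet> i) * iter_dderiv [i, j] u x)\<bar> \<le> (\<Sum>i\<in>Basis. \<bar>iter_dderiv [i, j] u x\<bar>)" .
      then show "\<bar>(sgn x \<bullet> j) * (\<Sum>i\<in>Basis. (sgn x \<bullet> i) * iter_dderiv [i, j] u x)\<bar> \<le> (\<Sum>i\<in>Basis. \<bar>iter_dderiv [i, j] u x\<bar>)"
        by (rule abs_mult_le1[OF sb[OF j]])
    qed
    also have "\<dots> \<le> S x" unfolding S_def by (simp add: sum_nonneg)
    finally show ?thesis .
  qed
  show ?thesis
  proof
    show "0 \<le> max B 0" by simp
    show "\<bar>radial_deriv u x\<bar> \<le> max B 0" if "norm x \<le> R" for x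
      using b1[of x] B[of x] that by linarith
    show "\<bar>radial_deriv2 u x\<bar> \<le> max B 0" if "norm x \<le> R" for x
      using b2[of x] B[of x] that by linarith
  qed
qed

lemma bnd_compact:
  fixes g :: "real \<Rightarrow> real"
  assumes "continuous_on {a..b} g"
  obtains B where "B \<ge> 0" "\<And>r. r \<in> {a..b} \<Longrightarrow> \<bar>g r\<bar> \<le> B"
proof -
  have "compact (g ` {a..b})" by (rule compact_continuous_image[OF assms]) simp
  then obtain B where B: "\<forall>y\<in>g ` {a..b}. norm y \<le> B"
    using compact_imp_bounded[of "g ` {a..b}"] unfolding bounded_iff by blast
  show ?thesis
  proof
    show "max B 0 \<ge> 0" by simp
    show "\<bar>g r\<bar> \<le> max B 0" if "r \<in> {a..b}" for r using B that by force
  qed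
qed

lemma psi_bounds:
  fixes D :: "nat \<Rightarrow> real \<Rightarrow> real"
  assumes Dsucc: "\<forall>k. \<forall>x\<ge>0. (D k has_real_derivative D (Suc k) x) (at x within {0..})"
    and pos: "\<forall>x>0. D 0 x > 0" and D00: "D 0 0 = 0" and d1: "D 1 0 = 1" and D20: "D 2 0 = 0"
    and R: "R > 0"
  obtains c C where "c > 0" "C \<ge> 0" "\<And>r. 0 < r \<Longrightarrow> r \<le> R \<Longrightarrow> D 0 r \<ge> c * r"
    "\<And>r. 0 \<le> r \<Longrightarrow> r \<le> R \<Longrightarrow> D 0 r \<le> C * r"
    "\<And>r. 0 \<le> r \<Longrightarrow> r \<le> R \<Longrightarrow> \<bar>D 1 r\<bar> \<le> C"
    "\<And>r. 0 \<le> r \<Longrightarrow> r \<le> R \<Longrightarrow> \<bar>D 2 r\<bar> \<le> C * r"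
    "\<And>r. 0 \<le> r \<Longrightarrow> r \<le> R \<Longrightarrow> \<bar>(D 1 r)^2 - 1\<bar> \<le> C * r^2"
proof -
  have cont: "continuous_on {a..b} (D k)" if "0 \<le> a" for k a b
  proof -
    have "continuous_on {0..} (D k)"
      unfolding continuous_on_eq_continuous_within
      using Dsucc by (auto intro: DERIV_continuous)
    then show ?thesis by (rule continuous_on_subset) (use that in auto)
  qed
  have mvt: "\<exists>\<xi>\<in>{a..b}. D k b - D k a = D (Suc k) \<xi> * (b - a)" if "0 \<le> a" "a \<le> b" for k a b
  proof -
    have "\<exists>\<xi>\<in>{a..b}. D k b - D k a = (\<lambda>h. D (Suc k) \<xi> * h) (b - a)"
    proof (rule mvt_very_simple[OF \<open>a \<le> b\<close>])
      fix x assume x: "a \<le> x" "x \<le> b"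
      have "(D k has_real_derivative D (Suc k) x) (at x within {0..})" using Dsucc x that by auto
      then have "(D k has_real_derivative D (Suc k) x) (at x within {a..b})"
        by (rule DERIV_subset) (use that in auto)
      then show "(D k has_derivative (\<lambda>h. D (Suc k) x * h)) (at x within {a..b})"
        unfolding has_field_derivative_def by simp
    qed
    then show ?thesis by simp
  qed
  obtain B1 where B1: "B1 \<ge> 0" "\<And>r. r \<in> {0..R} \<Longrightarrow> \<bar>D 1 r\<bar> \<le> B1"
    using bnd_compact[OF cont[where a=0 and k=1 and b=R]] by auto
  obtain B3 where B3: "B3 \<ge> 0" "\<And>r. r \<in> {0..R} \<Longrightarrow> \<bar>D 3 r\<bar> \<le> B3"
    using bnd_compact[OF cont[where a=0 and k=3 and b=R]] by auto
  have b2: "\<bar>D 2 r\<bar> \<le> B3 * r" if rr: "0 \<le> r" "r \<le> R" for r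
  proof -
    obtain \<xi> where \<xi>: "\<xi> \<in> {0..r}" "D 2 r - D 2 0 = D 3 \<xi> * (r - 0)"
      using mvt[where a=0 and b=r and k=2] rr by auto
    have "\<bar>D 3 \<xi>\<bar> \<le> B3" using B3(2)[of \<xi>] \<xi>(1) rr by auto
    then show ?thesis using \<xi>(2) D20 rr by (simp add: abs_mult mult_right_mono)
  qed
  have b0: "D 0 r \<le> B1 * r" if rr: "0 \<le> r" "r \<le> R" for r
  proof -
    obtain \<xi> where \<xi>: "\<xi> \<in> {0..r}" "D 0 r - D 0 0 = D 1 \<xi> * (r - 0)"
      using mvt[where a=0 and b=r and k=0] rr by auto
    have "\<bar>D 1 \<xi>\<bar> \<le> B1" using B1(2)[of \<xi>] \<xi>(1) rr by auto
    then have "D 1 \<xi> * r \<le> B1 * r" using rr by (intro mult_right_mono) auto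
    then show ?thesis using \<xi>(2) D00 by simp
  qed
  have b1m: "\<bar>D 1 r - 1\<bar> \<le> B3 * r^2" if rr: "0 \<le> r" "r \<le> R" for r
  proof -
    obtain \<xi> where \<xi>: "\<xi> \<in> {0..r}" "D 1 r - D 1 0 = D 2 \<xi> * (r - 0)"
      using mvt[where a=0 and b=r and k=1, unfolded Suc_1] rr by auto
    have "\<bar>D 2 \<xi>\<bar> \<le> B3 * \<xi>" using b2[of \<xi>] \<xi>(1) rr by auto
    also have "\<dots> \<le> B3 * r" using \<xi>(1) B3(1) by (auto intro: mult_left_mono)
    finally have "\<bar>D 2 \<xi>\<bar> * r \<le> B3 * r * r" using rr by (intro mult_right_mono) auto
    then show ?thesis using \<xi>(2) d1 rr by (simp add: abs_mult power2_eq_square mult.assoc)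
  qed
  have b1sq: "\<bar>(D 1 r)^2 - 1\<bar> \<le> (B3 * (B1 + 1)) * r^2" if "0 \<le> r" "r \<le> R" for r
  proof -
    have "\<bar>(D 1 r)^2 - 1\<bar> = \<bar>D 1 r - 1\<bar> * \<bar>D 1 r + 1\<bar>"
      by (simp add: abs_mult[symmetric] power2_eq_square algebra_simps)
    also have "\<dots> \<le> (B3 * r^2) * (B1 + 1)"
    proof (rule mult_mono)
      show "\<bar>D 1 r - 1\<bar> \<le> B3 * r^2" using b1m that .
      show "\<bar>D 1 r + 1\<bar> \<le> B1 + 1" using B1(2)[of r] that by auto
    qed (use B3(1) in auto)
    finally show ?thesis by (simp add: ac_simps)
  qed
  define \<delta> where "\<delta> = min (min 1 R) (1 / (2 * B3 + 2))"
  have \<delta>: "\<delta> > 0" "\<delta> \<le> R" "\<delta> \<le> 1" "\<delta> \<le> 1 / (2 * B3 + 2)"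
    using R B3(1) by (auto simp: \<delta>_def)
  have lowsmall: "D 0 r \<ge> r / 2" if rr: "0 \<le> r" "r \<le> \<delta>" for r
  proof -
    obtain \<xi> where \<xi>: "\<xi> \<in> {0..r}" "D 0 r - D 0 0 = D 1 \<xi> * (r - 0)"
      using mvt[where a=0 and b=r and k=0] rr by auto
    have "\<bar>D 1 \<xi> - 1\<bar> \<le> B3 * \<xi>^2" using b1m[of \<xi>] \<xi>(1) rr \<delta> by auto
    also have "\<dots> \<le> B3 * \<xi>"
    proof -
      have "\<xi>^2 \<le> \<xi>" using \<xi>(1) rr \<delta> by (auto simp: power2_eq_square intro: mult_left_le_one_le)
      then show ?thesis using B3(1) by (intro mult_left_mono) auto
    qed
    also have "\<dots> \<le> B3 * (1 / (2 * B3 + 2))" using \<xi>(1) that \<delta> B3(1) by (intro mult_left_mono) auto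
    also have "\<dots> \<le> 1/2" using B3(1) by (simp add: field_simps)
    finally have "D 1 \<xi> \<ge> 1/2" by linarith
    then have "D 1 \<xi> * r \<ge> 1/2 * r" using that by (intro mult_right_mono) auto
    then show ?thesis using \<xi>(2) D00 by simp
  qed
  obtain x0 where x0: "x0 \<in> {\<delta>..R}" "\<And>y. y \<in> {\<delta>..R} \<Longrightarrow> D 0 x0 \<le> D 0 y"
    using continuous_attains_inf[of "{\<delta>..R}" "D 0"] cont[where a=\<delta> and k=0 and b=R] \<delta> by auto
  define m where "m = D 0 x0"
  have m: "m > 0" using x0(1) \<delta> pos by (auto simp: m_def)
  define c where "c = min (1/2) (m / R)"
  have c: "c > 0" using m R by (simp add: c_def)
  have low: "D 0 r \<ge> c * r" if "0 < r" "r \<le> R" for r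
  proof (cases "r \<le> \<delta>")
    case True
    have "c \<le> 1/2" unfolding c_def by (rule min.cobounded1)
    then have "c * r \<le> 1/2 * r" using that by (intro mult_right_mono) auto
    moreover have "D 0 r \<ge> r / 2" using lowsmall[of r] True that by auto
    ultimately show ?thesis by linarith
  next
    case False
    have "c * r \<le> (m / R) * R" using that c by (intro mult_mono) (auto simp: c_def)
    also have "\<dots> = m" using R by simp
    also have "\<dots> \<le> D 0 r" using x0(2)[of r] False that by (auto simp: m_def)
    finally show ?thesis .
  qed
  define C where "C = B1 + B3 + B3 * (B1 + 1)"
  have C: "C \<ge> 0" "B1 \<le> C" "B3 \<le> C" "B3 * (B1 + 1) \<le> C" using B1(1) B3(1) by (auto simp: C_def)
  show ?thesis
  proof
    show "c > 0" "C \<ge> 0" using c C by auto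
    show "D 0 r \<ge> c * r" if "0 < r" "r \<le> R" for r using low that .
    show "D 0 r \<le> C * r" if "0 \<le> r" "r \<le> R" for r
      using b0[OF that] mult_right_mono[OF C(2) that(1)] by linarith
    show "\<bar>D 1 r\<bar> \<le> C" if "0 \<le> r" "r \<le> R" for r using B1(2)[of r] that C by auto
    show "\<bar>D 2 r\<bar> \<le> C * r" if "0 \<le> r" "r \<le> R" for r
      using b2[OF that] mult_right_mono[OF C(3) that(1)] by linarith
    show "\<bar>(D 1 r)^2 - 1\<bar> \<le> C * r^2" if "0 \<le> r" "r \<le> R" for r
      using b1sq[OF that] mult_right_mono[OF C(4), of "r^2"] by simp
  qed
qed

lemma integrable_inv_sq:
  fixes g :: "'a::euclidean_space \<Rightarrow> real"
  assumes N3: "DIM('a) \<ge> 3" and g[measurable]: "g \<in> borel_measurable borel" and R: "R > 0" and K: "K \<ge> 0"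
   and zero: "\<And>x. norm x > R \<Longrightarrow> g x = 0"
   and bnd: "\<And>x. norm x \<le> R \<Longrightarrow> \<bar>g x\<bar> \<le> K / (norm x)^2"
  shows "integrable lborel g"
proof (rule integrableI_bounded)
  show "g \<in> borel_measurable lborel" by simp
  define h where "h x = ennreal (if norm x \<le> R then K / (norm x)^2 else 0)" for x :: 'a
  have hm[measurable]: "h \<in> borel_measurable borel" unfolding h_def by measurable
  define c where "c = K * R^(DIM('a) - 3)"
  have c: "c \<ge> 0" using K R by (simp add: c_def)
  have le1: "(\<integral>\<^sup>+x. ennreal (norm (g x)) \<partial>lborel) \<le> (\<integral>\<^sup>+x. h x \<partial>lborel)"
  proof (rule nn_integral_mono)
    fix x :: 'a
    show "ennreal (norm (g x)) \<le> h x"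
    proof (cases "norm x \<le> R")
      case True
      then show ?thesis using bnd[OF True] by (simp add: h_def indicator_def)
    next
      case False
      then show ?thesis using zero[of x] by (simp add: h_def)
    qed
  qed
  have inner: "(\<integral>\<^sup>+\<rho>. indicator {0<..} \<rho> * h (\<rho> *\<^sub>R sgn x) * ennreal (\<rho>^(DIM('a)-1)) \<partial>lborel)
      \<le> ennreal (c * R)" for x :: 'a
  proof -
    have "(\<integral>\<^sup>+\<rho>. indicator {0<..} \<rho> * h (\<rho> *\<^sub>R sgn x) * ennreal (\<rho>^(DIM('a)-1)) \<partial>lborel)
        \<le> (\<integral>\<^sup>+\<rho>. ennreal c * indicator {0..R} \<rho> \<partial>lborel)"
    proof (rule nn_integral_mono)
      fix \<rho> :: real
      show "indicator {0<..} \<rho> * h (\<rho> *\<^sub>R sgn x) * ennreal (\<rho>^(DIM('a)-1)) \<le> ennreal c * indicator {0..R} \<rho>"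
      proof (cases "\<rho> > 0 \<and> \<rho> \<le> R \<and> x \<noteq> 0")
        case True
        then have nr: "norm (\<rho> *\<^sub>R sgn x) = \<rho>" by (simp add: norm_sgn)
        have "K / \<rho>^2 * \<rho>^(DIM('a)-1) = K * \<rho>^(DIM('a)-3)"
        proof -
          obtain m where m: "DIM('a) = m + 3" using N3 by (metis le_add_diff_inverse2)
          show ?thesis using True by (simp add: m power_add power2_eq_square field_simps)
        qed
        also have "\<dots> \<le> c" unfolding c_def using True K by (intro mult_left_mono power_mono) auto
        finally have "K / \<rho>^2 * \<rho>^(DIM('a)-1) \<le> c" .
        then show ?thesis using True nr K
          by (simp add: h_def indicator_def ennreal_mult'[symmetric] ennreal_leI)
      next
        case False
        then consider "\<rho> \<le> 0" | "\<rho> > R" | "x = 0" by fastforce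
        then show ?thesis
        proof cases
          case 2
          then have "norm (\<rho> *\<^sub>R sgn x) = 0 \<or> norm (\<rho> *\<^sub>R sgn x) > R"
            using R by (auto simp: norm_sgn)
          then show ?thesis by (auto simp: h_def indicator_def)
        qed (auto simp: h_def indicator_def)
      qed
    qed
    also have "\<dots> = ennreal c * emeasure lborel {0..R}" by (rule nn_integral_cmult_indicator) simp
    also have "\<dots> = ennreal (c * R)" using R c by (simp add: ennreal_mult')
    finally show ?thesis .
  qed
  have "(\<integral>\<^sup>+x. h x \<partial>lborel) = of_nat DIM('a) * (\<integral>\<^sup>+x. indicator (cball 0 1) x *
      (\<integral>\<^sup>+\<rho>. indicator {0<..} \<rho> * h (\<rho> *\<^sub>R sgn x) * ennreal (\<rho>^(DIM('a)-1)) \<partial>lborel) \<partial>lborel)"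
    by (rule polar_nn[OF hm])
  also have "\<dots> \<le> of_nat DIM('a) * (\<integral>\<^sup>+x. ennreal (c * R) * indicator (cball (0::'a) 1) x \<partial>lborel)"
  proof -
    have int_le: "(\<integral>\<^sup>+x. indicator (cball 0 1) x *
      (\<integral>\<^sup>+\<rho>. indicator {0<..} \<rho> * h (\<rho> *\<^sub>R sgn x) * ennreal (\<rho>^(DIM('a)-1)) \<partial>lborel) \<partial>lborel)
       \<le> (\<integral>\<^sup>+x. ennreal (c * R) * indicator (cball (0::'a) 1) x \<partial>lborel)"
    proof (rule nn_integral_mono)
      fix x :: 'a
      show "indicator (cball 0 1) x *
        (\<integral>\<^sup>+\<rho>. indicator {0<..} \<rho> * h (\<rho> *\<^sub>R sgn x) * ennreal (\<rho>^(DIM('a)-1)) \<partial>lborel)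
         \<le> ennreal (c * R) * indicator (cball 0 1) x"
        using inner[of x] by (cases "x \<in> cball 0 1") (auto simp: mult.commute)
    qed
    show ?thesis by (intro mult_left_mono int_le zero_le)
  qed
  also have "\<dots> = of_nat DIM('a) * (ennreal (c * R) * emeasure lborel (cball (0::'a) 1))"
    by (subst nn_integral_cmult_indicator) auto
  also have "\<dots> < \<infinity>"
    using emeasure_bounded_finite[of "cball (0::'a) 1"]
    by (simp add: ennreal_mult_less_top of_nat_less_top)
  finally show "(\<integral>\<^sup>+x. ennreal (norm (g x)) \<partial>lborel) < \<infinity>" using le1 by (meson le_less_trans)
qed

lemma ray_nonneg:
  fixes I B B' :: "real \<Rightarrow> real"
  assumes Im[measurable]: "I \<in> borel_measurable borel"
    and R: "R > 0" and K: "K \<ge> 0"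
    and Izero: "\<And>\<rho>. \<rho> \<ge> R \<Longrightarrow> I \<rho> = 0"
    and Ibnd: "\<And>\<rho>. 0 < \<rho> \<Longrightarrow> \<rho> \<le> R \<Longrightarrow> \<bar>I \<rho>\<bar> \<le> K"
    and Bbnd: "\<And>\<epsilon>. 0 < \<epsilon> \<Longrightarrow> \<epsilon> \<le> 1 \<Longrightarrow> \<epsilon> \<le> R \<Longrightarrow> B \<epsilon> \<le> K * \<epsilon>"
    and BR: "B R = 0"
    and Bder: "\<And>\<rho>. 0 < \<rho> \<Longrightarrow> (B has_real_derivative B' \<rho>) (at \<rho>)"
    and Ige: "\<And>\<rho>. 0 < \<rho> \<Longrightarrow> B' \<rho> \<le> I \<rho>"
  shows "(\<integral>\<^sup>+\<rho>. ennreal (indicator {0<..} \<rho> * - I \<rho>) \<partial>lborel) \<le> (\<integral>\<^sup>+\<rho>. ennreal (indicator {0<..} \<rho> * I \<rho>) \<partial>lborel)"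
proof -
  define J where "J \<rho> = indicator {0<..} \<rho> * I \<rho>" for \<rho> :: real
  have Jm[measurable]: "J \<in> borel_measurable borel" unfolding J_def by measurable
  have intJ: "integrable lborel J"
  proof (rule Bochner_Integration.integrable_bound[where f="\<lambda>\<rho>. K * indicator {0..R} \<rho> :: real"])
    show "integrable lborel (\<lambda>\<rho>. K * indicator {0..R} \<rho> :: real)"
      using R by (intro integrable_mult_right integrable_real_indicator) (auto simp: emeasure_lborel_Icc_eq)
    show "J \<in> borel_measurable lborel" by simp
    show "AE \<rho> in lborel. norm (J \<rho>) \<le> norm (K * indicator {0..R} \<rho> :: real)"
    proof (rule AE_I2)
      fix \<rho> :: real
      show "norm (J \<rho>) \<le> norm (K * indicator {0..R} \<rho> :: real)"
        using Ibnd[of \<rho>] Izero[of \<rho>] K by (cases "\<rho> > 0"; cases "\<rho> \<le> R") (auto simp: J_def indicator_def)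
    qed
  qed
  have "(J has_integral (integral\<^sup>L lborel J)) UNIV" by (rule has_integral_integral_lborel[OF intJ])
  moreover have "(\<lambda>\<rho>. if \<rho> \<in> {0..R} then J \<rho> else 0) = J"
    using Izero by (auto simp: J_def indicator_def fun_eq_iff)
  ultimately have hJ: "(J has_integral (integral\<^sup>L lborel J)) {0..R}"
    using has_integral_restrict_UNIV[of "{0..R}" J] by simp
  have Jint: "J integrable_on {0..R}" using hJ by blast
  have intval: "integral {0..R} J = integral\<^sup>L lborel J" using hJ by blast
  have lower: "integral\<^sup>L lborel J \<ge> - (2 * K) * \<epsilon>" if e: "0 < \<epsilon>" "\<epsilon> \<le> 1" "\<epsilon> \<le> R" for \<epsilon>
  proof -
    have comb: "integral {0..\<epsilon>} J + integral {\<epsilon>..R} J = integral {0..R} J"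
      using Henstock_Kurzweil_Integration.integral_combine[of 0 \<epsilon> R J] e Jint by auto
    have J1: "J integrable_on {\<epsilon>..R}" by (rule integrable_on_subinterval[OF Jint]) (use e in auto)
    have J0: "J integrable_on {0..\<epsilon>}" by (rule integrable_on_subinterval[OF Jint]) (use e in auto)
    have ftc: "(B' has_integral (B R - B \<epsilon>)) {\<epsilon>..R}"
    proof (rule fundamental_theorem_of_calculus)
      show "\<epsilon> \<le> R" using e by simp
      fix x assume x: "x \<in> {\<epsilon>..R}"
      then have "x > 0" using e by auto
      then show "(B has_vector_derivative B' x) (at x within {\<epsilon>..R})"
        using Bder[of x] by (simp add: has_real_derivative_iff_has_vector_derivative has_vector_derivative_at_within)
    qed
    have "0 \<le> integral {\<epsilon>..R} (\<lambda>\<rho>. J \<rho> - B' \<rho>)"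
    proof (rule integral_nonneg)
      show "(\<lambda>\<rho>. J \<rho> - B' \<rho>) integrable_on {\<epsilon>..R}" using J1 ftc by (intro integrable_diff) auto
      fix \<rho> assume "\<rho> \<in> {\<epsilon>..R}"
      then have "\<rho> > 0" using e by auto
      then show "0 \<le> J \<rho> - B' \<rho>" using Ige[of \<rho>] by (simp add: J_def)
    qed
    also have "\<dots> = integral {\<epsilon>..R} J - (B R - B \<epsilon>)"
      using J1 ftc by (subst integral_diff) (auto simp: integral_unique)
    finally have i1: "integral {\<epsilon>..R} J \<ge> - K * \<epsilon>" using BR Bbnd[OF e] by simp
    have "norm (integral {0..\<epsilon>} J) \<le> integral {0..\<epsilon>} (\<lambda>_. K)"
    proof (rule integral_norm_bound_integral)
      show "J integrable_on {0..\<epsilon>}" by (rule J0)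
      show "(\<lambda>_. K) integrable_on {0..\<epsilon>}" by auto
      fix \<rho> assume "\<rho> \<in> {0..\<epsilon>}"
      then show "norm (J \<rho>) \<le> K" using Ibnd[of \<rho>] e K by (cases "\<rho> > 0") (auto simp: J_def)
    qed
    also have "\<dots> = K * \<epsilon>" using e by simp
    finally have i0: "integral {0..\<epsilon>} J \<ge> - K * \<epsilon>" by simp
    show ?thesis using comb i0 i1 intval by simp
  qed
  have nonneg: "integral\<^sup>L lborel J \<ge> 0"
  proof (rule field_le_epsilon)
    fix e :: real assume e: "0 < e"
    define \<epsilon> where "\<epsilon> = min (min 1 R) (e / (2 * K + 1))"
    have ep: "0 < \<epsilon>" "\<epsilon> \<le> 1" "\<epsilon> \<le> R" "\<epsilon> \<le> e / (2 * K + 1)" using e R K by (auto simp: \<epsilon>_def)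
    have "2 * K * \<epsilon> \<le> 2 * K * (e / (2 * K + 1))" using ep K by (intro mult_left_mono) auto
    also have "\<dots> \<le> e" using K e by (simp add: field_simps)
    finally show "0 \<le> integral\<^sup>L lborel J + e" using lower[OF ep(1-3)] by simp
  qed
  have f1: "(\<integral>\<^sup>+\<rho>. ennreal (J \<rho>) \<partial>lborel) \<noteq> \<infinity>" using integrableD(2)[OF intJ] .
  have f2: "(\<integral>\<^sup>+\<rho>. ennreal (- J \<rho>) \<partial>lborel) \<noteq> \<infinity>" using integrableD(3)[OF intJ] .
  have "enn2real (\<integral>\<^sup>+\<rho>. ennreal (- J \<rho>) \<partial>lborel) \<le> enn2real (\<integral>\<^sup>+\<rho>. ennreal (J \<rho>) \<partial>lborel)"
    using nonneg real_lebesgue_integral_def[OF intJ] by simp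
  then have "(\<integral>\<^sup>+\<rho>. ennreal (- J \<rho>) \<partial>lborel) \<le> (\<integral>\<^sup>+\<rho>. ennreal (J \<rho>) \<partial>lborel)"
  proof -
    have "(\<integral>\<^sup>+\<rho>. ennreal (- J \<rho>) \<partial>lborel) = ennreal (enn2real (\<integral>\<^sup>+\<rho>. ennreal (- J \<rho>) \<partial>lborel))"
      using f2 by (simp add: ennreal_enn2real_if)
    also have "\<dots> \<le> ennreal (enn2real (\<integral>\<^sup>+\<rho>. ennreal (J \<rho>) \<partial>lborel))"
      using \<open>enn2real _ \<le> enn2real _\<close> by (rule ennreal_leI)
    also have "\<dots> = (\<integral>\<^sup>+\<rho>. ennreal (J \<rho>) \<partial>lborel)"
      using f1 by (simp add: ennreal_enn2real_if)
    finally show ?thesis .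
  qed
  then show ?thesis by (simp add: J_def)
qed

lemma key_identity_defs:
  fixes D :: "nat \<Rightarrow> real \<Rightarrow> real" and P r v w :: real and m N :: nat
  assumes N: "N = m + 3" and P: "P > 0" and r: "r > 0" and DP: "D 0 r = P"
  shows "((w + real (N - 1) * (D 1 r / D 0 r) * v)\<^sup>2 * (P / r)^(N-1)
     - (real N - 1) / 4 * ((Lambda_rad N D r + 4 * (K_rad D r - H_tan D r)) * v\<^sup>2 * (P / r)^(N-1))
     - 1/4 * ((1 / r\<^sup>2) * v\<^sup>2 * (P / r)^(N-1))
     - ((real N)\<^sup>2 - 1) / 4 * ((1 / P\<^sup>2) * v\<^sup>2 * (P / r)^(N-1))) * r^(N-1)
   = P^(m+2) * (w + (real (m+2) / 2) * (D 1 r / P) * v - v / (2*r))\<^sup>2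
     + (2 * v * w * ((real (m+2) / 2) * D 1 r * P^(m+1) + P^(m+2) / (2*r))
        + v\<^sup>2 * ((real (m+2) / 2) * D 2 r * P^(m+1) + (real (m+2) / 2) * D 1 r * (real (m+1) * P^m * D 1 r)
              + real (m+2) * P^(m+1) * D 1 r / (2*r) - P^(m+2) / (2*r\<^sup>2)))"
proof -
  have n1: "N - 1 = m + 2" using N by simp
  have rn: "real N = real m + 3" using N by simp
  have e2: "P^(m+2) = P^m * P\<^sup>2" "P^(m+1) = P^m * P" by (simp_all add: power_add power2_eq_square)
  have e3: "(P/r)^(m+2) = P^m * P\<^sup>2 / r^(m+2)" unfolding power_divide e2(1) ..
  show ?thesis
    unfolding n1 rn Lambda_rad_def K_rad_def H_tan_def DP e2 e3 using P r
    by (simp add: field_simps power2_eq_square)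
qed

lemma abs_prod_le: "\<bar>a\<bar> \<le> A \<Longrightarrow> \<bar>b\<bar> \<le> B \<Longrightarrow> \<bar>(a::real) * b\<bar> \<le> A * B"
  by (simp add: abs_mult mult_mono')

lemma abs_mult_nonneg: "0 \<le> y \<Longrightarrow> \<bar>x * y\<bar> = \<bar>x\<bar> * (y::real)"
  by (simp add: abs_mult)

lemma tri2: "k \<ge> 0 \<Longrightarrow> \<bar>- 2 * a + k * b\<bar> \<le> 2 * \<bar>a\<bar> + k * \<bar>b::real\<bar>"
  using abs_triangle_ineq[of "-2*a" "k*b"] by (simp add: abs_mult)

lemma integrand_bounds:
  fixes r P P1 P2 v w c C M R :: real and m :: nat
  assumes r: "0 < r" "r \<le> R" and c: "c > 0" and C: "C \<ge> 0" and M: "M \<ge> 0"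
    and cP: "c * r \<le> P" and PC: "P \<le> C * r" and P1: "\<bar>P1\<bar> \<le> C" and P2: "\<bar>P2\<bar> \<le> C * r"
    and H: "\<bar>P1\<^sup>2 - 1\<bar> \<le> C * r\<^sup>2" and v: "\<bar>v\<bar> \<le> M" and w: "\<bar>w\<bar> \<le> M"
  shows "\<bar>(w + real (m+2) * (P1 / P) * v)\<^sup>2 * (P / r)^(m+2)\<bar> \<le> (M * R + real (m+2) * C * M / c)\<^sup>2 * C^(m+2) / r\<^sup>2"
    and "\<bar>((- 2 * (-(P2 / P)) - real m * (-((P1\<^sup>2 - 1) / P\<^sup>2))) + 4 * (-(P2 / P) - (-((P1\<^sup>2 - 1) / P\<^sup>2)))) * v\<^sup>2 * (P / r)^(m+2)\<bar>
           \<le> (2 * C / c + real (m+4) * C / c\<^sup>2) * M\<^sup>2 * C^(m+2) * R\<^sup>2 / r\<^sup>2"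
    and "\<bar>(1 / r\<^sup>2) * v\<^sup>2 * (P / r)^(m+2)\<bar> \<le> M\<^sup>2 * C^(m+2) / r\<^sup>2"
    and "\<bar>(1 / P\<^sup>2) * v\<^sup>2 * (P / r)^(m+2)\<bar> \<le> M\<^sup>2 * C^(m+2) / c\<^sup>2 / r\<^sup>2"
proof -
  have Ppos: "P > 0" using c r cP by (smt (verit) mult_pos_pos)
  have q0: "0 \<le> P / r" using Ppos r by simp
  have q1: "P / r \<le> C" using PC r by (simp add: divide_le_eq)
  define V where "V = (P / r)^(m+2)"
  have vol0: "0 \<le> V" unfolding V_def using q0 by (rule zero_le_power)
  have vol: "V \<le> C^(m+2)" unfolding V_def using q1 q0 by (rule power_mono)
  have v2: "v\<^sup>2 \<le> M\<^sup>2" using power_mono[OF v abs_ge_zero, of 2] by simp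
  have v20: "0 \<le> v\<^sup>2" by simp
  have vv: "v\<^sup>2 * V \<le> M\<^sup>2 * C^(m+2)"
    using v2 vol vol0 by (intro mult_mono) auto
  have vv0: "0 \<le> v\<^sup>2 * V" using vol0 by simp
  have rR: "1 \<le> R\<^sup>2 / r\<^sup>2" using r by (simp add: power_mono)
  have cr: "0 < c * r" using c r by simp
  have pp2: "0 < P\<^sup>2 * (c * r)\<^sup>2" using Ppos c r by (intro mult_pos_pos zero_less_power)
  have iP: "1 / P \<le> 1 / (c * r)" using cP cr Ppos by (intro divide_left_mono) auto
  have p1p: "\<bar>P1 / P\<bar> \<le> C / (c * r)"
  proof -
    have "\<bar>P1 / P\<bar> = \<bar>P1\<bar> * (1 / P)" using Ppos by (simp add: abs_divide)
    also have "\<dots> \<le> C * (1 / (c * r))" using P1 iP Ppos by (intro mult_mono) auto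
    finally show ?thesis by simp
  qed
  define L where "L = M * R + real (m+2) * C * M / c"
  have X: "\<bar>w + real (m+2) * (P1 / P) * v\<bar> \<le> L / r"
  proof -
    have "\<bar>w + real (m+2) * (P1 / P) * v\<bar> \<le> \<bar>w\<bar> + real (m+2) * (\<bar>P1 / P\<bar> * \<bar>v\<bar>)"
      by (simp add: abs_mult abs_triangle_ineq[THEN order_trans])
    also have "\<dots> \<le> M + real (m+2) * ((C / (c * r)) * M)"
      using w p1p v M C cr by (intro add_mono mult_left_mono mult_mono) auto
    also have "\<dots> = (M * r + real (m+2) * C * M / c) / r" using r c by (simp add: field_simps)
    also have "\<dots> \<le> L / r" unfolding L_def using r M by (intro divide_right_mono add_right_mono mult_left_mono) auto
    finally show ?thesis .
  qed
  have X2: "(w + real (m+2) * (P1 / P) * v)\<^sup>2 \<le> (L / r)\<^sup>2"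
    using power_mono[OF X abs_ge_zero, of 2] by simp
  have h1: "\<bar>(w + real (m+2) * (P1 / P) * v)\<^sup>2 * V\<bar> \<le> (M * R + real (m+2) * C * M / c)\<^sup>2 * C^(m+2) / r\<^sup>2"
  proof -
    have "\<bar>(w + real (m+2) * (P1 / P) * v)\<^sup>2 * V\<bar> = (w + real (m+2) * (P1 / P) * v)\<^sup>2 * V"
      using vol0 by simp
    also have "\<dots> \<le> (L / r)\<^sup>2 * C^(m+2)" using X2 vol vol0 by (intro mult_mono) auto
    finally show ?thesis unfolding L_def by (simp add: power_divide)
  qed
  show "\<bar>(w + real (m+2) * (P1 / P) * v)\<^sup>2 * (P / r)^(m+2)\<bar> \<le> (M * R + real (m+2) * C * M / c)\<^sup>2 * C^(m+2) / r\<^sup>2"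
    unfolding V_def[symmetric] by (rule h1)
  have k: "\<bar>P2 / P\<bar> \<le> C / c"
  proof -
    have "\<bar>P2 / P\<bar> = \<bar>P2\<bar> * (1 / P)" using Ppos by (simp add: abs_divide)
    also have "\<dots> \<le> (C * r) * (1 / (c * r))" using P2 iP Ppos by (intro mult_mono) auto
    also have "\<dots> = C / c" using r by simp
    finally show ?thesis .
  qed
  have h: "\<bar>(P1\<^sup>2 - 1) / P\<^sup>2\<bar> \<le> C / c\<^sup>2"
  proof -
    have iP2: "1 / P\<^sup>2 \<le> 1 / (c * r)\<^sup>2" using cP cr Ppos pp2 by (intro divide_left_mono power_mono) auto
    have "\<bar>(P1\<^sup>2 - 1) / P\<^sup>2\<bar> = \<bar>P1\<^sup>2 - 1\<bar> * (1 / P\<^sup>2)" using Ppos by (simp add: abs_divide)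
    also have "\<dots> \<le> (C * r\<^sup>2) * (1 / (c * r)\<^sup>2)" using H iP2 Ppos by (intro mult_mono) auto
    also have "\<dots> = C / c\<^sup>2" using r by (simp add: power_mult_distrib)
    finally show ?thesis .
  qed
  define G where "G = 2 * C / c + real (m+4) * C / c\<^sup>2"
  have Gt: "\<bar>(- 2 * (-(P2 / P)) - real m * (-((P1\<^sup>2 - 1) / P\<^sup>2))) + 4 * (-(P2 / P) - (-((P1\<^sup>2 - 1) / P\<^sup>2)))\<bar> \<le> G"
  proof -
    have "(- 2 * (-(P2 / P)) - real m * (-((P1\<^sup>2 - 1) / P\<^sup>2))) + 4 * (-(P2 / P) - (-((P1\<^sup>2 - 1) / P\<^sup>2)))
        = - 2 * (P2 / P) + real (m+4) * ((P1\<^sup>2 - 1) / P\<^sup>2)" by (simp add: algebra_simps add_divide_distrib[symmetric])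
    also have "\<bar>\<dots>\<bar> \<le> 2 * \<bar>P2 / P\<bar> + real (m+4) * \<bar>(P1\<^sup>2 - 1) / P\<^sup>2\<bar>"
      by (rule tri2) simp
    also have "\<dots> \<le> 2 * (C / c) + real (m+4) * (C / c\<^sup>2)"
      using k h by (intro add_mono mult_left_mono) auto
    finally show ?thesis unfolding G_def by simp
  qed
  have G0: "G \<ge> 0" using Gt by linarith
  have h2: "\<bar>((- 2 * (-(P2 / P)) - real m * (-((P1\<^sup>2 - 1) / P\<^sup>2))) + 4 * (-(P2 / P) - (-((P1\<^sup>2 - 1) / P\<^sup>2)))) * v\<^sup>2 * V\<bar>
           \<le> (2 * C / c + real (m+4) * C / c\<^sup>2) * M\<^sup>2 * C^(m+2) * R\<^sup>2 / r\<^sup>2"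
  proof -
    have "\<bar>((- 2 * (-(P2 / P)) - real m * (-((P1\<^sup>2 - 1) / P\<^sup>2))) + 4 * (-(P2 / P) - (-((P1\<^sup>2 - 1) / P\<^sup>2)))) * v\<^sup>2 * V\<bar>
        = \<bar>(- 2 * (-(P2 / P)) - real m * (-((P1\<^sup>2 - 1) / P\<^sup>2))) + 4 * (-(P2 / P) - (-((P1\<^sup>2 - 1) / P\<^sup>2)))\<bar> * (v\<^sup>2 * V)"
      using abs_mult_nonneg[OF vv0, of "(- 2 * (-(P2 / P)) - real m * (-((P1\<^sup>2 - 1) / P\<^sup>2))) + 4 * (-(P2 / P) - (-((P1\<^sup>2 - 1) / P\<^sup>2)))"]
      by (simp only: mult.assoc)
    also have "\<dots> \<le> G * (M\<^sup>2 * C^(m+2))" by (rule mult_mono[OF Gt vv G0 vv0])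
    also have "\<dots> \<le> G * (M\<^sup>2 * C^(m+2)) * (R\<^sup>2 / r\<^sup>2)"
    proof -
      have "0 \<le> G * (M\<^sup>2 * C^(m+2))" using G0 C by simp
      from mult_left_mono[OF rR this] show ?thesis by simp
    qed
    finally show ?thesis unfolding G_def by (simp add: field_simps)
  qed
  show "\<bar>((- 2 * (-(P2 / P)) - real m * (-((P1\<^sup>2 - 1) / P\<^sup>2))) + 4 * (-(P2 / P) - (-((P1\<^sup>2 - 1) / P\<^sup>2)))) * v\<^sup>2 * (P / r)^(m+2)\<bar>
           \<le> (2 * C / c + real (m+4) * C / c\<^sup>2) * M\<^sup>2 * C^(m+2) * R\<^sup>2 / r\<^sup>2"
    unfolding V_def[symmetric] by (rule h2)
  have h3: "\<bar>(1 / r\<^sup>2) * v\<^sup>2 * V\<bar> \<le> M\<^sup>2 * C^(m+2) / r\<^sup>2"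
  proof -
    have "\<bar>(1 / r\<^sup>2) * v\<^sup>2 * V\<bar> = (v\<^sup>2 * V) / r\<^sup>2" using vv0 vol0 r by (simp add: abs_mult)
    also have "\<dots> \<le> M\<^sup>2 * C^(m+2) / r\<^sup>2" using vv r by (intro divide_right_mono) auto
    finally show ?thesis .
  qed
  show "\<bar>(1 / r\<^sup>2) * v\<^sup>2 * (P / r)^(m+2)\<bar> \<le> M\<^sup>2 * C^(m+2) / r\<^sup>2"
    unfolding V_def[symmetric] by (rule h3)
  have h4: "\<bar>(1 / P\<^sup>2) * v\<^sup>2 * V\<bar> \<le> M\<^sup>2 * C^(m+2) / c\<^sup>2 / r\<^sup>2"
  proof -
    have iP2: "1 / P\<^sup>2 \<le> 1 / (c * r)\<^sup>2" using cP cr Ppos pp2 by (intro divide_left_mono power_mono) auto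
    have "\<bar>(1 / P\<^sup>2) * v\<^sup>2 * V\<bar> = (1 / P\<^sup>2) * (v\<^sup>2 * V)" using vv0 vol0 Ppos by (simp add: abs_mult)
    also have "\<dots> \<le> (1 / (c * r)\<^sup>2) * (M\<^sup>2 * C^(m+2))" by (rule mult_mono[OF iP2 vv _ vv0]) simp
    also have "\<dots> = M\<^sup>2 * C^(m+2) / c\<^sup>2 / r\<^sup>2" by (simp add: power_mult_distrib field_simps)
    finally show ?thesis .
  qed
  show "\<bar>(1 / P\<^sup>2) * v\<^sup>2 * (P / r)^(m+2)\<bar> \<le> M\<^sup>2 * C^(m+2) / c\<^sup>2 / r\<^sup>2"
    unfolding V_def[symmetric] by (rule h4)
qed

lemma B_deriv:
  fixes v p q :: "real \<Rightarrow> real" and a \<rho> v1 p1 q1 :: real and m :: nat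
  assumes dv: "(v has_real_derivative v1) (at \<rho>)" and dp: "(p has_real_derivative p1) (at \<rho>)"
    and dq: "(q has_real_derivative q1) (at \<rho>)" and \<rho>: "\<rho> > 0"
  shows "((\<lambda>t. (v t)\<^sup>2 * (a * q t * (p t)^(m+1) + (p t)^(m+2) / (2*t))) has_real_derivative
      2 * v \<rho> * v1 * (a * q \<rho> * (p \<rho>)^(m+1) + (p \<rho>)^(m+2) / (2*\<rho>))
      + (v \<rho>)\<^sup>2 * (a * q1 * (p \<rho>)^(m+1) + a * q \<rho> * (real (m+1) * (p \<rho>)^m * p1)
          + real (m+2) * (p \<rho>)^(m+1) * p1 / (2*\<rho>) - (p \<rho>)^(m+2) / (2*\<rho>\<^sup>2))) (at \<rho>)"
proof -
  have d1: "((\<lambda>t. (v t)\<^sup>2) has_real_derivative 2 * v \<rho> * v1) (at \<rho>)"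
    using DERIV_power[OF dv, of 2] by (simp add: algebra_simps)
  have d2: "((\<lambda>t. (p t)^(m+1)) has_real_derivative real (m+1) * (p \<rho>)^m * p1) (at \<rho>)"
    using DERIV_power[OF dp, of "m+1"] by (simp add: algebra_simps)
  have d3: "((\<lambda>t. (p t)^(m+2)) has_real_derivative real (m+2) * (p \<rho>)^(m+1) * p1) (at \<rho>)"
    using DERIV_power[OF dp, of "m+2"] by (simp add: algebra_simps)
  have d4: "((\<lambda>t. a * q t * (p t)^(m+1)) has_real_derivative a * q1 * (p \<rho>)^(m+1) + a * q \<rho> * (real (m+1) * (p \<rho>)^m * p1)) (at \<rho>)"
    by (rule DERIV_cong[OF DERIV_mult[OF DERIV_cmult[OF dq, of a] d2]]) (simp add: algebra_simps)
  have d5: "((\<lambda>t. 2 * t) has_real_derivative 2) (at \<rho>)"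
    by (rule DERIV_cong[OF DERIV_cmult[OF DERIV_ident, of 2]]) simp
  have d6: "((\<lambda>t. (p t)^(m+2) / (2*t)) has_real_derivative
      (real (m+2) * (p \<rho>)^(m+1) * p1 * (2*\<rho>) - (p \<rho>)^(m+2) * 2) / ((2*\<rho>) * (2*\<rho>))) (at \<rho>)"
  proof -
    have ne: "2 * \<rho> \<noteq> 0" using \<rho> by simp
    show ?thesis by (rule DERIV_cong[OF DERIV_divide[OF d3 d5 ne]]) simp
  qed
  have d7: "((\<lambda>t. (p t)^(m+2) / (2*t)) has_real_derivative
      real (m+2) * (p \<rho>)^(m+1) * p1 / (2*\<rho>) - (p \<rho>)^(m+2) / (2*\<rho>\<^sup>2)) (at \<rho>)"
  proof -
    have "(real (m+2) * (p \<rho>)^(m+1) * p1 * (2*\<rho>) - (p \<rho>)^(m+2) * 2) / ((2*\<rho>) * (2*\<rho>))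
        = real (m+2) * (p \<rho>)^(m+1) * p1 / (2*\<rho>) - (p \<rho>)^(m+2) / (2*\<rho>\<^sup>2)"
      using \<rho> by (simp add: field_simps power2_eq_square)
    then show ?thesis by (rule DERIV_cong[OF d6])
  qed
  show ?thesis
    by (rule DERIV_cong[OF DERIV_mult[OF d1 DERIV_add[OF d4 d7]]]) (simp add: algebra_simps)
qed

lemma B_bound:
  fixes v P P1 C M a \<epsilon> :: real and m :: nat
  assumes e: "0 < \<epsilon>" "\<epsilon> \<le> 1" and P: "0 \<le> P" "P \<le> C * \<epsilon>" and P1: "\<bar>P1\<bar> \<le> C"
    and v: "\<bar>v\<bar> \<le> M" and C: "C \<ge> 0" and M: "M \<ge> 0" and a: "a \<ge> 0"
  shows "v\<^sup>2 * (a * P1 * P^(m+1) + P^(m+2) / (2*\<epsilon>)) \<le> M\<^sup>2 * C^(m+2) * (a + 1/2) * \<epsilon>"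
proof -
  have em: "\<epsilon>^(m+1) \<le> \<epsilon>"
    using e by (simp add: power_le_one mult_left_le_one_le)
  have Pp: "P^(m+1) \<le> (C * \<epsilon>)^(m+1)" using P by (intro power_mono) auto
  have t1: "\<bar>a * P1 * P^(m+1)\<bar> \<le> a * C^(m+2) * \<epsilon>"
  proof -
    have "\<bar>a * P1 * P^(m+1)\<bar> = a * (\<bar>P1\<bar> * P^(m+1))" using a P by (simp add: abs_mult)
    also have "\<dots> \<le> a * (C * (C * \<epsilon>)^(m+1))"
      using P1 Pp P C by (intro mult_left_mono mult_mono) (auto simp: a)
    also have "\<dots> = a * C^(m+2) * \<epsilon>^(m+1)" by (simp add: power_mult_distrib)
    also have "\<dots> \<le> a * C^(m+2) * \<epsilon>" using em a C by (intro mult_left_mono) auto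
    finally show ?thesis .
  qed
  have t2: "\<bar>P^(m+2) / (2*\<epsilon>)\<bar> \<le> C^(m+2) * \<epsilon> / 2"
  proof -
    have Pp2: "P^(m+2) \<le> (C * \<epsilon>)^(m+2)" using P by (intro power_mono) auto
    have "\<bar>P^(m+2) / (2*\<epsilon>)\<bar> = P^(m+2) / (2*\<epsilon>)" using P e by simp
    also have "\<dots> \<le> (C * \<epsilon>)^(m+2) / (2*\<epsilon>)" using Pp2 e by (intro divide_right_mono) auto
    also have "\<dots> = C^(m+2) * \<epsilon>^(m+1) / 2" using e by (simp add: power_mult_distrib field_simps)
    also have "\<dots> \<le> C^(m+2) * \<epsilon> / 2" using em C by (intro divide_right_mono mult_left_mono) auto
    finally show ?thesis .
  qed
  have v2: "v\<^sup>2 \<le> M\<^sup>2" using power_mono[OF v abs_ge_zero, of 2] by simp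
  have "v\<^sup>2 * (a * P1 * P^(m+1) + P^(m+2) / (2*\<epsilon>)) \<le> v\<^sup>2 * \<bar>a * P1 * P^(m+1) + P^(m+2) / (2*\<epsilon>)\<bar>"
    by (intro mult_left_mono) auto
  also have "\<dots> \<le> M\<^sup>2 * (a * C^(m+2) * \<epsilon> + C^(m+2) * \<epsilon> / 2)"
  proof (rule mult_mono[OF v2])
    show "\<bar>a * P1 * P^(m+1) + P^(m+2) / (2*\<epsilon>)\<bar> \<le> a * C^(m+2) * \<epsilon> + C^(m+2) * \<epsilon> / 2"
      using t1 t2 abs_triangle_ineq[of "a * P1 * P^(m+1)" "P^(m+2) / (2*\<epsilon>)"] by linarith
  qed auto
  also have "\<dots> = M\<^sup>2 * C^(m+2) * (a + 1/2) * \<epsilon>" by (simp add: algebra_simps)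
  finally show ?thesis .
qed

lemma supp_bound:
  fixes u :: "'a::euclidean_space \<Rightarrow> real"
  assumes "compact_support u"
  obtains R0 where "R0 > 0" "\<And>x. R0 \<le> norm x \<Longrightarrow> u x = 0"
proof -
  have "bounded (closure {x. u x \<noteq> 0})" using assms unfolding compact_support_def by (rule compact_imp_bounded)
  then have "bounded {x. u x \<noteq> 0}" using bounded_subset closure_subset by blast
  then obtain a where a: "\<And>x. x \<in> {x. u x \<noteq> 0} \<Longrightarrow> norm x \<le> a" unfolding bounded_iff by blast
  show ?thesis
  proof
    show "\<bar>a\<bar> + 1 > 0" by simp
    show "u x = 0" if "\<bar>a\<bar> + 1 \<le> norm x" for x
      using a[of x] that by force
  qed
qed

lemma ray_zero:
  fixes u :: "'a::euclidean_space \<Rightarrow> real"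
  assumes R0: "\<And>x. R0 \<le> norm x \<Longrightarrow> u x = 0" and w: "norm w = 1" and t: "t > R0"
  shows "deriv (\<lambda>t. u (t *\<^sub>R w)) t = 0" "deriv (deriv (\<lambda>t. u (t *\<^sub>R w))) t = 0"
proof -
  have z: "u (z *\<^sub>R w) = 0" if "z \<in> {R0<..}" for z
  proof -
    have "z > 0 \<or> R0 < 0" using that by auto
    show ?thesis
    proof (cases "R0 \<le> norm (z *\<^sub>R w)")
      case True then show ?thesis by (rule R0)
    next
      case False
      then have "norm (z *\<^sub>R w) < R0" by simp
      moreover have "norm (z *\<^sub>R w) = \<bar>z\<bar>" using w by simp
      ultimately show ?thesis using that by auto
    qed
  qed
  have d0: "deriv (\<lambda>t. u (t *\<^sub>R w)) s = 0" if s: "s \<in> {R0<..}" for s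
  proof -
    have "((\<lambda>t. u (t *\<^sub>R w)) has_real_derivative 0) (at s)"
      by (rule has_field_derivative_transform_within_open[of "\<lambda>_. 0" 0 s "{R0<..}"]) (use s z in auto)
    then show ?thesis by (rule DERIV_imp_deriv)
  qed
  show "deriv (\<lambda>t. u (t *\<^sub>R w)) t = 0" using d0 t by simp
  have "(deriv (\<lambda>t. u (t *\<^sub>R w)) has_real_derivative 0) (at t)"
    by (rule has_field_derivative_transform_within_open[of "\<lambda>_. 0" 0 t "{R0<..}"]) (use t d0 in auto)
  then show "deriv (deriv (\<lambda>t. u (t *\<^sub>R w))) t = 0" by (rule DERIV_imp_deriv)
qed

lemma cont_Dk:
  assumes Dsucc: "\<forall>k. \<forall>x\<ge>0. (D k has_real_derivative D (Suc k) x) (at x within {0..})"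
  shows "continuous_on {0..} (D k)"
  unfolding continuous_on_eq_continuous_within using Dsucc by (auto intro: DERIV_continuous)

lemma Dk_at:
  assumes Dsucc: "\<forall>k. \<forall>x\<ge>0. (D k has_real_derivative D (Suc k) x) (at x within {0..})" and r: "r > 0"
  shows "(D k has_real_derivative D (Suc k) r) (at r)"
proof -
  have "(D k has_real_derivative D (Suc k) r) (at r within {0..})" using Dsucc r by auto
  moreover have "at r within {0..} = at r"
    by (rule at_within_interior) (use r in auto)
  ultimately show ?thesis by simp
qed

lemma meas_Dk_norm:
  assumes Dsucc: "\<forall>k. \<forall>x\<ge>0. (D k has_real_derivative D (Suc k) x) (at x within {0..})"
  shows "(\<lambda>x::'a::euclidean_space. D k (norm x)) \<in> borel_measurable borel"
proof -
  have "continuous_on UNIV (\<lambda>x::'a. D k (norm x))"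
    by (rule continuous_on_compose2[OF cont_Dk[OF Dsucc] continuous_on_norm_id]) auto
  then show ?thesis by (rule borel_measurable_continuous_onI)
qed

theorem theorem2p5:
  fixes psi :: "real \<Rightarrow> real" and D :: "nat \<Rightarrow> real \<Rightarrow> real"
    and u :: "'a::euclidean_space \<Rightarrow> real"
  assumes dim: "DIM('a) \<ge> 3"
    and D0: "\<forall>x\<ge>0. D 0 x = psi x"
    and Dsucc: "\<forall>k. \<forall>x\<ge>0. (D k has_real_derivative D (Suc k) x) (at x within {0..})"
    and nonneg: "\<forall>x\<ge>0. psi x \<ge> 0"
    and pos: "\<forall>x>0. psi x > 0"
    and d1: "D 1 0 = 1"
    and even: "\<forall>k. D (2 * k) 0 = 0"
    and u_smooth: "smooth_fun u"
    and u_supp: "compact_support u"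
  shows "(\<integral>x. (radial_laplacian DIM('a) D u x)\<^sup>2 * vol_density DIM('a) psi x \<partial>lborel)
       - (real DIM('a) - 1) / 4 *
         (\<integral>x. (Lambda_rad DIM('a) D (norm x) + 4 * (K_rad D (norm x) - H_tan D (norm x)))
               * (radial_deriv u x)\<^sup>2 * vol_density DIM('a) psi x \<partial>lborel)
     \<ge> 1 / 4 * (\<integral>x. (1 / (norm x)\<^sup>2) * (radial_deriv u x)\<^sup>2 * vol_density DIM('a) psi x \<partial>lborel)
       + ((real DIM('a))\<^sup>2 - 1) / 4 *
         (\<integral>x. (1 / (psi (norm x))\<^sup>2) * (radial_deriv u x)\<^sup>2 * vol_density DIM('a) psi x \<partial>lborel)"
proof -
  define N where "N = DIM('a)"
  have N3: "N \<ge> 3" using dim by (simp add: N_def)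
  obtain m where m: "N = m + 3" using le_Suc_ex[OF N3] by (auto simp: add.commute)
  have D00: "D 0 0 = 0" using even[rule_format, of 0] by simp
  have D20: "D 2 0 = 0" using even[rule_format, of 1] by simp
  have Dpos: "\<forall>x>0. D 0 x > 0" using pos D0 by auto
  have psiD: "psi r = D 0 r" if "0 \<le> r" for r using D0 that by auto
  obtain R0 where R0: "R0 > 0" "\<And>x. R0 \<le> norm x \<Longrightarrow> u x = 0" using supp_bound[OF u_supp] by blast
  define R where "R = R0 + 1"
  have R1: "R > 1" using R0 by (simp add: R_def)
  have Rpos: "R > 0" using R1 by simp
  obtain c C where c: "c > 0" and C: "C \<ge> 0" and lowP: "\<And>r. 0 < r \<Longrightarrow> r \<le> R \<Longrightarrow> D 0 r \<ge> c * r"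
    and upP: "\<And>r. 0 \<le> r \<Longrightarrow> r \<le> R \<Longrightarrow> D 0 r \<le> C * r"
    and bP1: "\<And>r. 0 \<le> r \<Longrightarrow> r \<le> R \<Longrightarrow> \<bar>D 1 r\<bar> \<le> C"
    and bP2: "\<And>r. 0 \<le> r \<Longrightarrow> r \<le> R \<Longrightarrow> \<bar>D 2 r\<bar> \<le> C * r"
    and bH: "\<And>r. 0 \<le> r \<Longrightarrow> r \<le> R \<Longrightarrow> \<bar>(D 1 r)^2 - 1\<bar> \<le> C * r^2"
    using psi_bounds[OF Dsucc Dpos D00 d1 D20 Rpos] by blast
  obtain M where M: "M \<ge> 0" and bv: "\<And>x. norm x \<le> R \<Longrightarrow> \<bar>radial_deriv u x\<bar> \<le> M"
     and bw: "\<And>x. norm x \<le> R \<Longrightarrow> \<bar>radial_deriv2 u x\<bar> \<le> M"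
    using dd_bounds[OF u_smooth] by blast
  have rd_zero: "radial_deriv u x = 0 \<and> radial_deriv2 u x = 0" if x: "R0 < norm x" for x
  proof -
    have "x \<noteq> 0" using x R0 by auto
    then have ns: "norm (sgn x) = 1" by (simp add: norm_sgn)
    show ?thesis unfolding radial_deriv_def radial_deriv2_def
      using ray_zero[of R0 u "sgn x" "norm x", OF R0(2) ns x] by simp
  qed
  have m_rd[measurable]: "radial_deriv u \<in> borel_measurable borel" by (rule radial_deriv_meas[OF u_smooth])
  have m_rd2[measurable]: "radial_deriv2 u \<in> borel_measurable borel" by (rule radial_deriv2_meas[OF u_smooth])
  have m_D[measurable]: "(\<lambda>x::'a. D k (norm x)) \<in> borel_measurable borel" for k by (rule meas_Dk_norm[OF Dsucc])
  have m_psi[measurable]: "(\<lambda>x::'a. psi (norm x)) \<in> borel_measurable borel"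
  proof -
    have "(\<lambda>x::'a. psi (norm x)) = (\<lambda>x. D 0 (norm x))" using psiD by auto
    then show ?thesis using m_D[of 0] by simp
  qed
  define A where "A x = (radial_laplacian N D u x)\<^sup>2 * vol_density N psi x" for x :: 'a
  define Bc where "Bc x = (Lambda_rad N D (norm x) + 4 * (K_rad D (norm x) - H_tan D (norm x)))
               * (radial_deriv u x)\<^sup>2 * vol_density N psi x" for x :: 'a
  define Cc where "Cc x = (1 / (norm x)\<^sup>2) * (radial_deriv u x)\<^sup>2 * vol_density N psi x" for x :: 'a
  define E where "E x = (1 / (psi (norm x))\<^sup>2) * (radial_deriv u x)\<^sup>2 * vol_density N psi x" for x :: 'a
  define F where "F x = A x - (real N - 1) / 4 * Bc x - 1 / 4 * Cc x - ((real N)\<^sup>2 - 1) / 4 * E x" for x :: 'a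
  have mA[measurable]: "A \<in> borel_measurable borel"
    unfolding A_def radial_laplacian_def vol_density_def by measurable
  have mB[measurable]: "Bc \<in> borel_measurable borel"
    unfolding Bc_def Lambda_rad_def K_rad_def H_tan_def vol_density_def by measurable
  have mC[measurable]: "Cc \<in> borel_measurable borel"
    unfolding Cc_def vol_density_def by measurable
  have mE[measurable]: "E \<in> borel_measurable borel"
    unfolding E_def vol_density_def by measurable
  have mF[measurable]: "F \<in> borel_measurable borel"
    unfolding F_def by measurable

  define KA where "KA = (M * R + real (m+2) * C * M / c)\<^sup>2 * C^(m+2)"
  define KB where "KB = (2 * C / c + real (m+4) * C / c\<^sup>2) * M\<^sup>2 * C^(m+2) * R\<^sup>2"
  define KC where "KC = M\<^sup>2 * C^(m+2)"
  define KE where "KE = M\<^sup>2 * C^(m+2) / c\<^sup>2"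
  have K0: "KA \<ge> 0" "KB \<ge> 0" "KC \<ge> 0" "KE \<ge> 0" using c C M by (simp_all add: KA_def KB_def KC_def KE_def)
  have vol0: "vol_density N psi (0::'a) = 0" using m by (simp add: vol_density_def)
  have bnds: "\<bar>A x\<bar> \<le> KA / (norm x)\<^sup>2 \<and> \<bar>Bc x\<bar> \<le> KB / (norm x)\<^sup>2 \<and> \<bar>Cc x\<bar> \<le> KC / (norm x)\<^sup>2 \<and> \<bar>E x\<bar> \<le> KE / (norm x)\<^sup>2"
    if xR: "norm x \<le> R" for x
  proof (cases "x = 0")
    case True then show ?thesis by (simp add: A_def Bc_def Cc_def E_def vol0)
  next
    case False
    define r where "r = norm x"
    have r: "0 < r" "r \<le> R" using False xR by (auto simp: r_def)
    have r0: "0 \<le> r" using r by simp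
    have pr: "psi r = D 0 r" using psiD r0 by simp
    note ib = integrand_bounds[of r R c C M "D 0 r" "D 1 r" "D 2 r" "radial_deriv u x" "radial_deriv2 u x" m,
        OF r c C M lowP[OF r] upP[OF r0 r(2)] bP1[OF r0 r(2)] bP2[OF r0 r(2)] bH[OF r0 r(2)] bv[OF xR] bw[OF xR]]
    have n1: "N - 1 = m + 2" using m by simp
    have rn: "real N - 3 = real m" using m by simp
    have eA: "A x = (radial_deriv2 u x + real (m+2) * (D 1 r / D 0 r) * radial_deriv u x)\<^sup>2 * (D 0 r / r)^(m+2)"
      unfolding A_def radial_laplacian_def vol_density_def r_def[symmetric] pr n1 ..
    have eB: "Bc x = ((- 2 * (-(D 2 r / D 0 r)) - real m * (-(((D 1 r)\<^sup>2 - 1) / (D 0 r)\<^sup>2))) + 4 * (-(D 2 r / D 0 r) - (-(((D 1 r)\<^sup>2 - 1) / (D 0 r)\<^sup>2)))) * (radial_deriv u x)\<^sup>2 * (D 0 r / r)^(m+2)"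
      unfolding Bc_def Lambda_rad_def K_rad_def H_tan_def vol_density_def r_def[symmetric] pr n1 rn ..
    have eC: "Cc x = (1 / r\<^sup>2) * (radial_deriv u x)\<^sup>2 * (D 0 r / r)^(m+2)"
      unfolding Cc_def vol_density_def r_def[symmetric] pr n1 ..
    have eE: "E x = (1 / (D 0 r)\<^sup>2) * (radial_deriv u x)\<^sup>2 * (D 0 r / r)^(m+2)"
      unfolding E_def vol_density_def r_def[symmetric] pr n1 ..
    show ?thesis unfolding eA eB eC eE r_def[symmetric] KA_def KB_def KC_def KE_def using ib by simp
  qed
  have zF0: "A y = 0 \<and> Bc y = 0 \<and> Cc y = 0 \<and> E y = 0" if "norm y > R0" for y
    using rd_zero[OF that] by (simp add: A_def Bc_def Cc_def E_def radial_laplacian_def)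
  have zeroR: "A x = 0 \<and> Bc x = 0 \<and> Cc x = 0 \<and> E x = 0" if "norm x > R" for x
    using zF0[of x] that by (simp add: R_def)
  have intA: "integrable lborel A"
    by (rule integrable_inv_sq[OF dim mA Rpos K0(1)]) (use zeroR bnds in auto)
  have intB: "integrable lborel Bc"
    by (rule integrable_inv_sq[OF dim mB Rpos K0(2)]) (use zeroR bnds in auto)
  have intC: "integrable lborel Cc"
    by (rule integrable_inv_sq[OF dim mC Rpos K0(3)]) (use zeroR bnds in auto)
  have intE: "integrable lborel E"
    by (rule integrable_inv_sq[OF dim mE Rpos K0(4)]) (use zeroR bnds in auto)
  define c1 where "c1 = (real N - 1) / 4"
  define c2 where "c2 = ((real N)\<^sup>2 - 1) / 4"
  have c12: "c1 \<ge> 0" "c2 \<ge> 0" using N3 by (simp_all add: c1_def c2_def)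
  define KF where "KF = KA + c1 * KB + 1/4 * KC + c2 * KE"
  have KF0: "KF \<ge> 0" using K0 c12 by (simp add: KF_def)
  have bF: "\<bar>F x\<bar> \<le> KF / (norm x)\<^sup>2" if xR: "norm x \<le> R" for x
  proof -
    define t where "t = 1 / (norm x)\<^sup>2"
    have t: "t \<ge> 0" by (simp add: t_def)
    have b: "\<bar>A x\<bar> \<le> KA * t" "\<bar>Bc x\<bar> \<le> KB * t" "\<bar>Cc x\<bar> \<le> KC * t" "\<bar>E x\<bar> \<le> KE * t"
      using bnds[OF xR] by (simp_all add: t_def)
    have "\<bar>c1 * Bc x\<bar> \<le> c1 * (KB * t)" using b(2) c12 by (simp add: abs_mult mult_left_mono)
    moreover have "\<bar>c2 * E x\<bar> \<le> c2 * (KE * t)" using b(4) c12 by (simp add: abs_mult mult_left_mono)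
    moreover have "\<bar>1/4 * Cc x\<bar> \<le> 1/4 * (KC * t)" using b(3) by (simp add: abs_mult)
    ultimately have "\<bar>F x\<bar> \<le> KA * t + c1 * (KB * t) + 1/4 * (KC * t) + c2 * (KE * t)"
      using b(1) unfolding F_def c1_def[symmetric] c2_def[symmetric] by linarith
    also have "\<dots> = KF / (norm x)\<^sup>2" by (cases "x = 0") (simp_all add: KF_def t_def field_simps)
    finally show ?thesis .
  qed
  have F0: "F 0 = 0" using bF[of 0] Rpos by simp
  have intF: "integrable lborel F"
    by (rule integrable_inv_sq[OF dim mF Rpos KF0]) (use zeroR bF in \<open>auto simp: F_def\<close>)
  have Fint_eq: "integral\<^sup>L lborel F = integral\<^sup>L lborel A - c1 * integral\<^sup>L lborel Bc - 1/4 * integral\<^sup>L lborel Cc - c2 * integral\<^sup>L lborel E"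
    unfolding F_def c1_def[symmetric] c2_def[symmetric] using intA intB intC intE by simp
  have key: "(\<integral>\<^sup>+x. ennreal (- F x) \<partial>lborel) \<le> (\<integral>\<^sup>+x. ennreal (F x) \<partial>lborel)"
  proof -
    have inner: "(\<integral>\<^sup>+\<rho>. indicator {0<..} \<rho> * ennreal (- F (\<rho> *\<^sub>R sgn x)) * ennreal (\<rho>^(DIM('a)-1)) \<partial>lborel)
       \<le> (\<integral>\<^sup>+\<rho>. indicator {0<..} \<rho> * ennreal (F (\<rho> *\<^sub>R sgn x)) * ennreal (\<rho>^(DIM('a)-1)) \<partial>lborel)" for x :: 'a
    proof (cases "x = 0")
      case True then show ?thesis using F0 by simp
    next
      case False
      define \<omega> where "\<omega> = sgn x"
      have n\<omega>: "norm \<omega> = 1" using False by (simp add: \<omega>_def norm_sgn)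
      have s\<omega>: "sgn \<omega> = \<omega>" using n\<omega> by (simp add: sgn_div_norm)
      define v where "v = deriv (\<lambda>t. u (t *\<^sub>R \<omega>))"
      define v' where "v' = deriv v"
      have sc: "norm (\<rho> *\<^sub>R \<omega>) = \<rho>" "sgn (\<rho> *\<^sub>R \<omega>) = \<omega>" if "\<rho> > 0" for \<rho>
        using that n\<omega> s\<omega> by (auto simp: sgn_scaleR)
      have rdv: "radial_deriv u (\<rho> *\<^sub>R \<omega>) = v \<rho>" "radial_deriv2 u (\<rho> *\<^sub>R \<omega>) = v' \<rho>" if "\<rho> > 0" for \<rho>
        using sc[OF that] unfolding radial_deriv_def radial_deriv2_def v_def v'_def by simp_all
      have dv: "(v has_real_derivative v' \<rho>) (at \<rho>)" for \<rho>
      proof -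
        have "(v has_real_derivative iter_dderiv [\<omega>, \<omega>] u (\<rho> *\<^sub>R \<omega>)) (at \<rho>)"
          unfolding v_def by (rule ray_props(3)[OF u_smooth])
        moreover have "v' \<rho> = iter_dderiv [\<omega>, \<omega>] u (\<rho> *\<^sub>R \<omega>)"
          unfolding v'_def v_def using ray_props(4)[OF u_smooth, of \<omega>] by simp
        ultimately show ?thesis by simp
      qed
      define a where "a = real (m+2) / 2"
      have a0: "a \<ge> 0" by (simp add: a_def)
      define I where "I \<rho> = F (\<rho> *\<^sub>R \<omega>) * \<rho>^(N-1)" for \<rho>
      define B where "B t = (v t)\<^sup>2 * (a * D 1 t * (D 0 t)^(m+1) + (D 0 t)^(m+2) / (2*t))" for t
      define B' where "B' t = 2 * v t * v' t * (a * D 1 t * (D 0 t)^(m+1) + (D 0 t)^(m+2) / (2*t))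
        + (v t)\<^sup>2 * (a * D 2 t * (D 0 t)^(m+1) + a * D 1 t * (real (m+1) * (D 0 t)^m * D 1 t)
              + real (m+2) * (D 0 t)^(m+1) * D 1 t / (2*t) - (D 0 t)^(m+2) / (2*t\<^sup>2))" for t
      have Iid: "I \<rho> = (D 0 \<rho>)^(m+2) * (v' \<rho> + a * (D 1 \<rho> / D 0 \<rho>) * v \<rho> - v \<rho> / (2*\<rho>))\<^sup>2 + B' \<rho>"
        if \<rho>: "\<rho> > 0" for \<rho>
      proof -
        have P: "D 0 \<rho> > 0" using Dpos \<rho> by auto
        have pr: "psi \<rho> = D 0 \<rho>" using psiD \<rho> by simp
        have Fe: "F (\<rho> *\<^sub>R \<omega>) = ((v' \<rho> + real (N - 1) * (D 1 \<rho> / D 0 \<rho>) * v \<rho>)\<^sup>2 * (D 0 \<rho> / \<rho>)^(N-1)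
            - (real N - 1) / 4 * ((Lambda_rad N D \<rho> + 4 * (K_rad D \<rho> - H_tan D \<rho>)) * (v \<rho>)\<^sup>2 * (D 0 \<rho> / \<rho>)^(N-1))
            - 1/4 * ((1 / \<rho>\<^sup>2) * (v \<rho>)\<^sup>2 * (D 0 \<rho> / \<rho>)^(N-1))
            - ((real N)\<^sup>2 - 1) / 4 * ((1 / (D 0 \<rho>)\<^sup>2) * (v \<rho>)\<^sup>2 * (D 0 \<rho> / \<rho>)^(N-1)))"
          unfolding F_def A_def Bc_def Cc_def E_def radial_laplacian_def vol_density_def sc[OF \<rho>] rdv[OF \<rho>] pr ..
        show ?thesis unfolding I_def Fe B'_def a_def
          by (rule key_identity_defs[where D=D and P="D 0 \<rho>" and r=\<rho>, OF m P \<rho> refl])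
      qed
      have Ige: "B' \<rho> \<le> I \<rho>" if \<rho>: "\<rho> > 0" for \<rho>
      proof -
        have "0 \<le> (D 0 \<rho>)^(m+2) * (v' \<rho> + a * (D 1 \<rho> / D 0 \<rho>) * v \<rho> - v \<rho> / (2*\<rho>))\<^sup>2"
        proof (rule mult_nonneg_nonneg)
          have "0 < D 0 \<rho>" using Dpos \<rho> by simp
          then show "0 \<le> (D 0 \<rho>)^(m+2)" by (intro zero_le_power less_imp_le)
        qed simp
        then show ?thesis using Iid[OF \<rho>] by linarith
      qed
      have Bder: "(B has_real_derivative B' \<rho>) (at \<rho>)" if \<rho>: "\<rho> > 0" for \<rho>
        unfolding B_def B'_def
        by (rule B_deriv[OF dv Dk_at[OF Dsucc \<rho>, of 0, unfolded One_nat_def[symmetric]]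
                            Dk_at[OF Dsucc \<rho>, of 1, unfolded Suc_1] \<rho>])
      have Fz: "F y = 0" if "norm y > R0" for y using zF0[OF that] by (simp add: F_def)
      have Izero: "I \<rho> = 0" if "\<rho> \<ge> R" for \<rho>
      proof -
        have "\<rho> > 0" "\<rho> > R0" using that R1 by (auto simp: R_def)
        then show ?thesis using Fz[of "\<rho> *\<^sub>R \<omega>"] sc by (simp add: I_def)
      qed
      have Ibnd: "\<bar>I \<rho>\<bar> \<le> KF * R^m" if \<rho>: "0 < \<rho>" "\<rho> \<le> R" for \<rho>
      proof -
        have nr: "norm (\<rho> *\<^sub>R \<omega>) = \<rho>" using sc \<rho> by simp
        have "\<bar>I \<rho>\<bar> = \<bar>F (\<rho> *\<^sub>R \<omega>)\<bar> * \<rho>^(m+2)" using \<rho> m by (simp add: I_def abs_mult)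
        also have "\<dots> \<le> (KF / \<rho>\<^sup>2) * \<rho>^(m+2)"
          using bF[of "\<rho> *\<^sub>R \<omega>"] nr \<rho> by (intro mult_right_mono) auto
        also have "\<dots> = KF * \<rho>^m" using \<rho> by (simp add: power_add power2_eq_square)
        also have "\<dots> \<le> KF * R^m" using \<rho> KF0 by (intro mult_left_mono power_mono) auto
        finally show ?thesis .
      qed
      have Bbnd: "B \<epsilon> \<le> (M\<^sup>2 * C^(m+2) * (a + 1/2)) * \<epsilon>" if e: "0 < \<epsilon>" "\<epsilon> \<le> 1" "\<epsilon> \<le> R" for \<epsilon>
      proof -
        have e0: "0 \<le> \<epsilon>" using e by simp
        have vb: "\<bar>v \<epsilon>\<bar> \<le> M" using bv[of "\<epsilon> *\<^sub>R \<omega>"] rdv[OF e(1)] sc[OF e(1)] e by simp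
        have "D 0 \<epsilon> \<ge> 0" using Dpos e by (auto intro: less_imp_le)
        then show ?thesis unfolding B_def
          by (rule B_bound[OF e(1,2) _ upP[OF e0 e(3)] bP1[OF e0 e(3)] vb C M a0])
      qed
      have BR: "B R = 0"
      proof -
        have "R > 0" "norm (R *\<^sub>R \<omega>) > R0" using R1 sc Rpos by (auto simp: R_def)
        then have "v R = 0" using rd_zero[of "R *\<^sub>R \<omega>"] rdv by auto
        then show ?thesis by (simp add: B_def)
      qed
      define Kr where "Kr = KF * R^m + M\<^sup>2 * C^(m+2) * (a + 1/2)"
      have Kr0: "Kr \<ge> 0" using KF0 Rpos M C a0 by (simp add: Kr_def)
      have Im: "I \<in> borel_measurable borel" unfolding I_def by measurable
      have ray: "(\<integral>\<^sup>+\<rho>. ennreal (indicator {0<..} \<rho> * - I \<rho>) \<partial>lborel) \<le> (\<integral>\<^sup>+\<rho>. ennreal (indicator {0<..} \<rho> * I \<rho>) \<partial>lborel)"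
      proof (rule ray_nonneg[OF Im Rpos Kr0 Izero _ _ BR Bder Ige])
        show "\<bar>I \<rho>\<bar> \<le> Kr" if "0 < \<rho>" "\<rho> \<le> R" for \<rho>
        proof -
          have "0 \<le> M\<^sup>2 * C^(m+2) * (a + 1/2)" using M C a0 by simp
          then show ?thesis using Ibnd[OF that] unfolding Kr_def by linarith
        qed
        show "B \<epsilon> \<le> Kr * \<epsilon>" if "0 < \<epsilon>" "\<epsilon> \<le> 1" "\<epsilon> \<le> R" for \<epsilon>
        proof -
          have "KF * R^m * \<epsilon> \<ge> 0" using KF0 Rpos that by simp
          then show ?thesis using Bbnd[OF that] by (simp add: Kr_def algebra_simps)
        qed
      qed
      have conv: "indicator {0<..} \<rho> * ennreal (s * F (\<rho> *\<^sub>R \<omega>)) * ennreal (\<rho>^(DIM('a)-1))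
           = ennreal (indicator {0<..} \<rho> * (s * I \<rho>))" for \<rho> s
      proof (cases "\<rho> > 0")
        case True
        then have "ennreal (s * F (\<rho> *\<^sub>R \<omega>)) * ennreal (\<rho>^(DIM('a)-1)) = ennreal (s * F (\<rho> *\<^sub>R \<omega>) * \<rho>^(DIM('a)-1))"
          by (simp add: ennreal_mult'')
        then show ?thesis using True by (simp add: I_def N_def mult.assoc)
      qed simp
      have e1: "(\<integral>\<^sup>+\<rho>. indicator {0<..} \<rho> * ennreal (- F (\<rho> *\<^sub>R sgn x)) * ennreal (\<rho>^(DIM('a)-1)) \<partial>lborel)
          = (\<integral>\<^sup>+\<rho>. ennreal (indicator {0<..} \<rho> * - I \<rho>) \<partial>lborel)"
        using conv[of _ "-1"] unfolding \<omega>_def by simp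
      have e2: "(\<integral>\<^sup>+\<rho>. indicator {0<..} \<rho> * ennreal (F (\<rho> *\<^sub>R sgn x)) * ennreal (\<rho>^(DIM('a)-1)) \<partial>lborel)
          = (\<integral>\<^sup>+\<rho>. ennreal (indicator {0<..} \<rho> * I \<rho>) \<partial>lborel)"
        using conv[of _ 1] unfolding \<omega>_def by simp
      show ?thesis unfolding e1 e2 by (rule ray)
    qed
    have mFp[measurable]: "(\<lambda>x. ennreal (F x)) \<in> borel_measurable borel" by measurable
    have mFm[measurable]: "(\<lambda>x. ennreal (- F x)) \<in> borel_measurable borel" by measurable
    have "(\<integral>\<^sup>+x. ennreal (- F x) \<partial>lborel) = of_nat DIM('a) * (\<integral>\<^sup>+x. indicator (cball 0 1) x *
      (\<integral>\<^sup>+\<rho>. indicator {0<..} \<rho> * ennreal (- F (\<rho> *\<^sub>R sgn x)) * ennreal (\<rho>^(DIM('a)-1)) \<partial>lborel) \<partial>lborel)"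
      by (rule polar_nn[OF mFm])
    also have "\<dots> \<le> of_nat DIM('a) * (\<integral>\<^sup>+x. indicator (cball 0 1) x *
      (\<integral>\<^sup>+\<rho>. indicator {0<..} \<rho> * ennreal (F (\<rho> *\<^sub>R sgn x)) * ennreal (\<rho>^(DIM('a)-1)) \<partial>lborel) \<partial>lborel)"
      by (intro mult_left_mono nn_integral_mono inner zero_le)
    also have "\<dots> = (\<integral>\<^sup>+x. ennreal (F x) \<partial>lborel)"
      by (rule polar_nn[OF mFp, symmetric])
    finally show ?thesis .
  qed
  have Fnn: "integral\<^sup>L lborel F \<ge> 0"
  proof -
    have f1: "(\<integral>\<^sup>+x. ennreal (F x) \<partial>lborel) < top" using integrableD(2)[OF intF] by (simp add: top.not_eq_extremum)
    have "enn2real (\<integral>\<^sup>+x. ennreal (- F x) \<partial>lborel) \<le> enn2real (\<integral>\<^sup>+x. ennreal (F x) \<partial>lborel)"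
      by (rule enn2real_mono[OF key f1])
    then show ?thesis using real_lebesgue_integral_def[OF intF] by simp
  qed
  have "integral\<^sup>L lborel A - c1 * integral\<^sup>L lborel Bc \<ge> 1/4 * integral\<^sup>L lborel Cc + c2 * integral\<^sup>L lborel E"
    using Fnn Fint_eq by linarith
  then show ?thesis unfolding A_def Bc_def Cc_def E_def c1_def c2_def N_def .
qed

end
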